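(* Let $m,n\ge0$ with $m+n\ge 3$, and assume $\operatorname{char}K\ne2$ if $m+n=4$ and $\operatorname{char}K\ne3$ if $m+n=3$. Then the kernel of the universal central extension $\psi:\mathfrak{stl}(m,n,\mathcal A)\to\mathfrak{sl}(m,n,\mathcal A)$ in the category of Leibniz superalgebras is isomorphic (as a $K$-vector space) to $HH_1(\mathcal A)=\operatorname{Ker}d_1/\operatorname{Im}d_2$, where $d_1:\mathcal A\otimes\mathcal A\to\mathcal A$, $d_1(a_0\otimes a_1)=a_0a_1-a_1a_0$, and $d_2:\mathcal A^{\otimes3}\to\mathcal A\otimes\mathcal A$, $d_2(a_0\otimes a_1\otimes a_2)=a_0a_1\otimes a_2-a_0\otimes a_1a_2-a_1\otimes a_2a_0$.
   Context: Standing assumptions: $K$ is a field (the paper assumes throughout $\operatorname{char}K\ne 2,3$), and $\mathcal A$ is an associative unital $K$-algebra; tensor products over $K$. A Leibniz superalgebra is a $\mathbb Z_2$-graded $K$-space with a bilinear bracket respecting the grading and satisfying $[[a,b],c]=[a,[b,c]]-(-1)^{|a||b|}[b,[a,c]]$ for homogeneous elements. For $1\le i,j\le m+n$ put $\tau_{ij}=0$ if $i,j\le m$ or $i,j\ge m+1$, and $\tau_{ij}=1$ otherwise. $\mathfrak{gl}(m,n,\mathcal A)$: $(m+n)\times(m+n)$ matrices over $\mathcal A$, matrix unit $E_{ij}(a)$ of degree $\tau_{ij}$, bracket $[X,Y]=XY-(-1)^{\alpha\beta}YX$. $\mathfrak{sl}(m,n,\mathcal A)$ is the subsuperalgebra generated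 by the $E_{ij}(a)$, $i\ne j$. $\mathfrak{stl}(m,n,\mathcal A)$ is the Leibniz superalgebra generated by $v_{ij}(a)$, $1\le i\ne j\le m+n$, $a\in\mathcal A$, of degree $\tau_{ij}$, subject to: (1) $K$-linearity in $a$; (2) $[v_{ij}(a),v_{kl}(b)]=0$ if $i\ne l$, $j\ne k$; (3) $[v_{ij}(a),v_{kl}(b)]=v_{il}(ab)$ if $i\ne l$, $j=k$; (4) $[v_{ij}(a),v_{kl}(b)]=-(-1)^{\tau_{ij}\tau_{kl}}v_{kj}(ba)$ if $i=l$, $j\ne k$. $\psi$ is the homomorphism with $\psi(v_{ij}(a))=E_{ij}(a)$. *)

theory Defs
  imports Complex_Main "HOL-Library.Poly_Mapping"
begin

definition K_algebra :: "('k::field \<Rightarrow> 'a::{ring,monoid_mult} \<Rightarrow> 'a) \<Rightarrow> bool" where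
  "K_algebra sc \<longleftrightarrow> module sc \<and>
     (\<forall>c x y. sc c (x * y) = sc c x * y \<and> sc c (x * y) = x * sc c y)"

definition smul :: "'k::field \<Rightarrow> ('b \<Rightarrow>\<^sub>0 'k) \<Rightarrow> ('b \<Rightarrow>\<^sub>0 'k)" where
  "smul c f = Poly_Mapping.map ((*) c) f"

definition gen :: "'b \<Rightarrow> ('b \<Rightarrow>\<^sub>0 'k::field)" where
  "gen b = Poly_Mapping.single b 1"

definition coset :: "'v::ab_group_add set \<Rightarrow> 'v \<Rightarrow> 'v set" where
  "coset U x = (\<lambda>u. x + u) ` U"

text \<open>V/U and W/U' (quotients realised as sets of cosets) are isomorphic as
  K-vector spaces: a bijection of the coset sets compatible with the induced
  addition and scalar multiplication.\<close>
definition quot_iso ::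
  "('k \<Rightarrow> 'v::ab_group_add \<Rightarrow> 'v) \<Rightarrow> 'v set \<Rightarrow> 'v set \<Rightarrow>
   ('k \<Rightarrow> 'w::ab_group_add \<Rightarrow> 'w) \<Rightarrow> 'w set \<Rightarrow> 'w set \<Rightarrow> bool" where
  "quot_iso sV V U sW W U' \<longleftrightarrow>
     (\<exists>\<phi>. bij_betw \<phi> (coset U ` V) (coset U' ` W) \<and>
       (\<forall>x\<in>V. \<forall>y\<in>V. \<forall>x'\<in>W. \<forall>y'\<in>W.
          \<phi> (coset U x) = coset U' x' \<longrightarrow> \<phi> (coset U y) = coset U' y' \<longrightarrow>
          \<phi> (coset U (x + y)) = coset U' (x' + y')) \<and>
       (\<forall>c. \<forall>x\<in>V. \<forall>x'\<in>W.
          \<phi> (coset U x) = coset U' x' \<longrightarrow> \<phi> (coset U (sV c x)) = coset U' (sW c x')))"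

definition idx :: "nat \<Rightarrow> nat \<Rightarrow> nat set" where
  "idx m n = {1..m+n}"

text \<open>tau m i j is True iff tau_ij = 1.\<close>
definition tau :: "nat \<Rightarrow> nat \<Rightarrow> nat \<Rightarrow> bool" where
  "tau m i j \<longleftrightarrow> ((i \<le> m) \<noteq> (j \<le> m))"

definition sgn_par :: "bool \<Rightarrow> bool \<Rightarrow> 'r::ring_1" where
  "sgn_par p q = (if p \<and> q then -1 else 1)"

datatype 'a tr = Gen nat nat 'a | Br "'a tr" "'a tr"

fun deg :: "nat \<Rightarrow> 'a tr \<Rightarrow> bool" where
  "deg m (Gen i j a) = tau m i j"
| "deg m (Br s t) = (deg m s \<noteq> deg m t)"

fun valid :: "nat \<Rightarrow> nat \<Rightarrow> 'a tr \<Rightarrow> bool" where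
  "valid m n (Gen i j a) \<longleftrightarrow> i \<in> idx m n \<and> j \<in> idx m n \<and> i \<noteq> j"
| "valid m n (Br s t) \<longleftrightarrow> valid m n s \<and> valid m n t"

text \<open>The free (non-associative) K-algebra on the homogeneous symbols v_ij(a).\<close>
definition FreeL :: "nat \<Rightarrow> nat \<Rightarrow> ('a tr \<Rightarrow>\<^sub>0 'k::field) set" where
  "FreeL m n = {f. \<forall>t\<in>Poly_Mapping.keys f. valid m n t}"

definition br :: "('a tr \<Rightarrow>\<^sub>0 'k::field) \<Rightarrow> ('a tr \<Rightarrow>\<^sub>0 'k) \<Rightarrow> ('a tr \<Rightarrow>\<^sub>0 'k)" where
  "br f g = (\<Sum>s\<in>Poly_Mapping.keys f. \<Sum>t\<in>Poly_Mapping.keys g. Poly_Mapping.single (Br s t) (Poly_Mapping.lookup f s * Poly_Mapping.lookup g t))"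

definition homog :: "nat \<Rightarrow> bool \<Rightarrow> ('a tr \<Rightarrow>\<^sub>0 'k::field) \<Rightarrow> bool" where
  "homog m p f \<longleftrightarrow> (\<forall>t\<in>Poly_Mapping.keys f. deg m t = p)"

definition v :: "nat \<Rightarrow> nat \<Rightarrow> 'a \<Rightarrow> ('a tr \<Rightarrow>\<^sub>0 'k::field)" where
  "v i j a = gen (Gen i j a)"

definition stl_rels ::
  "('k::field \<Rightarrow> 'a::{ring,monoid_mult} \<Rightarrow> 'a) \<Rightarrow> nat \<Rightarrow> nat \<Rightarrow> ('a tr \<Rightarrow>\<^sub>0 'k) set" where
  "stl_rels sc m n =
     \<comment> \<open>super Leibniz identity for homogeneous elements\<close>
     {br (br x y) z - br x (br y z) + smul (sgn_par p q) (br y (br x z))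
        | x y z p q r. x \<in> FreeL m n \<and> y \<in> FreeL m n \<and> z \<in> FreeL m n \<and>
            homog m p x \<and> homog m q y \<and> homog m r z}
   \<union> \<comment> \<open>(1) K-linearity in a\<close>
     {v i j (sc c a + b) - smul c (v i j a) - v i j b
        | i j c a b. i \<in> idx m n \<and> j \<in> idx m n \<and> i \<noteq> j}
   \<union> \<comment> \<open>(2)\<close>
     {br (v i j a) (v k l b)
        | i j k l a b. {i,j,k,l} \<subseteq> idx m n \<and> i \<noteq> j \<and> k \<noteq> l \<and> i \<noteq> l \<and> j \<noteq> k}
   \<union> \<comment> \<open>(3)\<close>
     {br (v i j a) (v j l b) - v i l (a * b)
        | i j l a b. {i,j,l} \<subseteq> idx m n \<and> i \<noteq> j \<and> j \<noteq> l \<and> i \<noteq> l}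
   \<union> \<comment> \<open>(4)\<close>
     {br (v i j a) (v k i b) + smul (sgn_par (tau m i j) (tau m k i)) (v k j (b * a))
        | i j k a b. {i,j,k} \<subseteq> idx m n \<and> i \<noteq> j \<and> k \<noteq> i \<and> j \<noteq> k}"

inductive_set alg_ideal :: "nat \<Rightarrow> nat \<Rightarrow> ('a tr \<Rightarrow>\<^sub>0 'k::field) set \<Rightarrow> ('a tr \<Rightarrow>\<^sub>0 'k) set"
  for m n R where
  rel: "r \<in> R \<Longrightarrow> r \<in> alg_ideal m n R"
| zero: "0 \<in> alg_ideal m n R"
| add: "x \<in> alg_ideal m n R \<Longrightarrow> y \<in> alg_ideal m n R \<Longrightarrow> x + y \<in> alg_ideal m n R"
| scal: "x \<in> alg_ideal m n R \<Longrightarrow> smul c x \<in> alg_ideal m n R"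
| left: "x \<in> alg_ideal m n R \<Longrightarrow> f \<in> FreeL m n \<Longrightarrow> br f x \<in> alg_ideal m n R"
| right: "x \<in> alg_ideal m n R \<Longrightarrow> f \<in> FreeL m n \<Longrightarrow> br x f \<in> alg_ideal m n R"

text \<open>stl(m,n,A) = FreeL m n / stl_ideal sc m n.\<close>
definition stl_ideal :: "('k::field \<Rightarrow> 'a::{ring,monoid_mult} \<Rightarrow> 'a) \<Rightarrow> nat \<Rightarrow> nat \<Rightarrow> ('a tr \<Rightarrow>\<^sub>0 'k) set" where
  "stl_ideal sc m n = alg_ideal m n (stl_rels sc m n)"

type_synonym 'a mat = "nat \<Rightarrow> nat \<Rightarrow> 'a"

definition Emat :: "nat \<Rightarrow> nat \<Rightarrow> 'a::{ring,monoid_mult} \<Rightarrow> 'a mat" where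
  "Emat i j a = (\<lambda>r s. if r = i \<and> s = j then a else 0)"

definition mmul :: "nat \<Rightarrow> nat \<Rightarrow> 'a::{ring,monoid_mult} mat \<Rightarrow> 'a mat \<Rightarrow> 'a mat" where
  "mmul m n X Y = (\<lambda>r s. \<Sum>k\<in>idx m n. X r k * Y k s)"

definition sbr :: "nat \<Rightarrow> nat \<Rightarrow> bool \<Rightarrow> bool \<Rightarrow> 'a::{ring,monoid_mult} mat \<Rightarrow> 'a mat \<Rightarrow> 'a mat" where
  "sbr m n p q X Y = (\<lambda>r s. mmul m n X Y r s - (if p \<and> q then - mmul m n Y X r s else mmul m n Y X r s))"

text \<open>psi on the free algebra: v_ij(a) goes to E_ij(a), brackets to super brackets.\<close>
fun mev :: "nat \<Rightarrow> nat \<Rightarrow> 'a::{ring,monoid_mult} tr \<Rightarrow> 'a mat" where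
  "mev m n (Gen i j a) = Emat i j a"
| "mev m n (Br s t) = sbr m n (deg m s) (deg m t) (mev m n s) (mev m n t)"

definition evalF :: "('k::field \<Rightarrow> 'a::{ring,monoid_mult} \<Rightarrow> 'a) \<Rightarrow> nat \<Rightarrow> nat \<Rightarrow> ('a tr \<Rightarrow>\<^sub>0 'k) \<Rightarrow> 'a mat" where
  "evalF sc m n f = (\<lambda>r s. \<Sum>t\<in>Poly_Mapping.keys f. sc (Poly_Mapping.lookup f t) (mev m n t r s))"

text \<open>Representatives of Ker psi: elements of the free algebra mapped to 0.\<close>
definition ker_psi :: "('k::field \<Rightarrow> 'a::{ring,monoid_mult} \<Rightarrow> 'a) \<Rightarrow> nat \<Rightarrow> nat \<Rightarrow> ('a tr \<Rightarrow>\<^sub>0 'k) set" where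
  "ker_psi sc m n = {f \<in> FreeL m n. evalF sc m n f = (\<lambda>r s. 0)}"

text \<open>A \<otimes> A = free space on A \<times> A modulo the bilinearity relations.\<close>
definition bilin_rels :: "('k::field \<Rightarrow> 'a::{ring,monoid_mult} \<Rightarrow> 'a) \<Rightarrow> ('a \<times> 'a \<Rightarrow>\<^sub>0 'k) set" where
  "bilin_rels sc =
     {gen (a + a', b) - gen (a, b) - gen (a', b) | a a' b. True}
   \<union> {gen (a, b + b') - gen (a, b) - gen (a, b') | a b b'. True}
   \<union> {gen (sc c a, b) - smul c (gen (a, b)) | c a b. True}
   \<union> {gen (a, sc c b) - smul c (gen (a, b)) | c a b. True}"

definition tensor_null :: "('k::field \<Rightarrow> 'a::{ring,monoid_mult} \<Rightarrow> 'a) \<Rightarrow> ('a \<times> 'a \<Rightarrow>\<^sub>0 'k) set" where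
  "tensor_null sc = module.span smul (bilin_rels sc)"

text \<open>Lifts of d_1 and d_2 to the free spaces.\<close>
definition d1 :: "('k::field \<Rightarrow> 'a::{ring,monoid_mult} \<Rightarrow> 'a) \<Rightarrow> ('a \<times> 'a \<Rightarrow>\<^sub>0 'k) \<Rightarrow> 'a" where
  "d1 sc f = (\<Sum>p\<in>Poly_Mapping.keys f. sc (Poly_Mapping.lookup f p) (fst p * snd p - snd p * fst p))"

definition d2 :: "('a::{ring,monoid_mult} \<times> 'a \<times> 'a \<Rightarrow>\<^sub>0 'k::field) \<Rightarrow> ('a \<times> 'a \<Rightarrow>\<^sub>0 'k)" where
  "d2 g = (\<Sum>q\<in>Poly_Mapping.keys g. case q of (a0, a1, a2) \<Rightarrow>
      smul (Poly_Mapping.lookup g q) (gen (a0 * a1, a2) - gen (a0, a1 * a2) - gen (a1, a2 * a0)))"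

text \<open>Preimage in the free space of Ker d_1 \<subseteq> A \<otimes> A.\<close>
definition HH1_cycles :: "('k::field \<Rightarrow> 'a::{ring,monoid_mult} \<Rightarrow> 'a) \<Rightarrow> ('a \<times> 'a \<Rightarrow>\<^sub>0 'k) set" where
  "HH1_cycles sc = {f. d1 sc f = 0}"

text \<open>Preimage in the free space of Im d_2 \<subseteq> A \<otimes> A.\<close>
definition HH1_bounds :: "('k::field \<Rightarrow> 'a::{ring,monoid_mult} \<Rightarrow> 'a) \<Rightarrow> ('a \<times> 'a \<Rightarrow>\<^sub>0 'k) set" where
  "HH1_bounds sc = {d2 g + b | g b. b \<in> tensor_null sc}"

end

theory Submission
  imports Defs
begin


lemma lookup_smul [simp]: "Poly_Mapping.lookup (smul c f) x = c * Poly_Mapping.lookup f x"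
  unfolding smul_def by transfer (auto simp: when_def)

lemma smul_module: "module (smul :: 'k::field \<Rightarrow> ('b \<Rightarrow>\<^sub>0 'k) \<Rightarrow> _)"
  by standard (auto intro!: poly_mapping_eqI simp: lookup_add algebra_simps)

locale fmod = module scale for scale :: "'k::field \<Rightarrow> 'v::ab_group_add \<Rightarrow> 'v"

interpretation SM: fmod "smul :: 'k::field \<Rightarrow> ('b \<Rightarrow>\<^sub>0 'k) \<Rightarrow> _"
  by (simp add: fmod_def smul_module)

lemma smul_single [simp]: "smul c (Poly_Mapping.single x d) = Poly_Mapping.single x (c * d)"
  by (rule poly_mapping_eqI) (simp add: lookup_single when_def)

lemma smul_gen: "smul c (gen x) = Poly_Mapping.single x c"
  by (simp add: gen_def)

lemma keys_smul: "Poly_Mapping.keys (smul c f) \<subseteq> Poly_Mapping.keys f"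
  by (auto simp: in_keys_iff)

definition linx :: "('k::zero \<Rightarrow> 'v \<Rightarrow> 'v) \<Rightarrow> ('b \<Rightarrow> 'v) \<Rightarrow> ('b \<Rightarrow>\<^sub>0 'k) \<Rightarrow> 'v::comm_monoid_add" where
  "linx s \<phi> f = (\<Sum>p\<in>Poly_Mapping.keys f. s (Poly_Mapping.lookup f p) (\<phi> p))"

context fmod
begin

lemma linx_superset:
  assumes "finite S" "Poly_Mapping.keys f \<subseteq> S"
  shows "linx scale \<phi> f = (\<Sum>p\<in>S. scale (Poly_Mapping.lookup f p) (\<phi> p))"
  unfolding linx_def
  by (rule sum.mono_neutral_left) (use assms in \<open>auto simp: in_keys_iff\<close>)

lemma linx_add: "linx scale \<phi> (f + g) = linx scale \<phi> f + linx scale \<phi> g"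
proof -
  let ?S = "Poly_Mapping.keys f \<union> Poly_Mapping.keys g"
  have "linx scale \<phi> (f + g) = (\<Sum>p\<in>?S. scale (Poly_Mapping.lookup (f+g) p) (\<phi> p))"
    by (rule linx_superset) (auto dest: keys_add[THEN subsetD])
  also have "\<dots> = (\<Sum>p\<in>?S. scale (Poly_Mapping.lookup f p) (\<phi> p)) + (\<Sum>p\<in>?S. scale (Poly_Mapping.lookup g p) (\<phi> p))"
    by (simp add: lookup_add scale_left_distrib sum.distrib)
  also have "\<dots> = linx scale \<phi> f + linx scale \<phi> g"
    by (simp add: linx_superset[of ?S f] linx_superset[of ?S g])
  finally show ?thesis .
qed

lemma linx_zero [simp]: "linx scale \<phi> 0 = 0"
  by (simp add: linx_def)

lemma linx_single [simp]: "linx scale \<phi> (Poly_Mapping.single b c) = scale c (\<phi> b)"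
  by (subst linx_superset[of "{b}"]) auto

lemma linx_smul: "linx scale \<phi> (smul c f) = scale c (linx scale \<phi> f)"
proof -
  have "linx scale \<phi> (smul c f) = (\<Sum>p\<in>Poly_Mapping.keys f. scale (Poly_Mapping.lookup (smul c f) p) (\<phi> p))"
    by (rule linx_superset) (auto simp: in_keys_iff)
  also have "\<dots> = scale c (linx scale \<phi> f)"
    by (simp add: linx_def scale_sum_right)
  finally show ?thesis .
qed

lemma linx_uminus: "linx scale \<phi> (- f) = - linx scale \<phi> f"
proof -
  have "linx scale \<phi> (- f + f) = 0" by simp
  then show ?thesis unfolding linx_add by (simp add: add_eq_0_iff)
qed

lemma linx_diff: "linx scale \<phi> (f - g) = linx scale \<phi> f - linx scale \<phi> g"
  using linx_add[of \<phi> f "-g"] by (simp add: linx_uminus)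

lemma linx_sum: "linx scale \<phi> (sum F A) = (\<Sum>x\<in>A. linx scale \<phi> (F x))"
  by (induct A rule: infinite_finite_induct) (simp_all add: linx_add)

lemma linx_fun_diff: "linx scale (\<lambda>p. \<phi> p - \<psi> p) f = linx scale \<phi> f - linx scale \<psi> f"
  by (simp add: linx_def scale_right_diff_distrib sum_subtractf)

lemma linx_fun_add: "linx scale (\<lambda>p. \<phi> p + \<psi> p) f = linx scale \<phi> f + linx scale \<psi> f"
  by (simp add: linx_def scale_right_distrib sum.distrib)

end

lemma linx_gen [simp]:
  fixes s :: "'k::field \<Rightarrow> 'v::ab_group_add \<Rightarrow> 'v"
  shows "fmod s \<Longrightarrow> linx s \<phi> (gen b) = \<phi> b"
  by (simp add: gen_def fmod.linx_single fmod_def module.scale_one)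

lemma fmod_smul: "fmod smul"
  by (simp add: fmod_def smul_module)

lemma linx_hom:
  fixes \<Psi> :: "'v::comm_monoid_add \<Rightarrow> 'w::ab_group_add"
  assumes add: "\<And>x y. \<Psi> (x + y) = \<Psi> x + \<Psi> y"
    and sc: "\<And>c x. \<Psi> (s1 c x) = s2 c (\<Psi> x)"
  shows "\<Psi> (linx s1 \<phi> f) = linx s2 (\<lambda>p. \<Psi> (\<phi> p)) (f::'b \<Rightarrow>\<^sub>0 'k::zero)"
proof -
  have z: "\<Psi> 0 = 0"
    using add[of 0 0] by simp
  show ?thesis
    unfolding linx_def
    by (subst sum_comp_morphism[symmetric, of \<Psi>]) (auto simp: z add sc o_def)
qed

definition subsp :: "('k \<Rightarrow> 'v \<Rightarrow> 'v) \<Rightarrow> 'v::ab_group_add set \<Rightarrow> bool" where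
  "subsp s N \<longleftrightarrow> 0 \<in> N \<and> (\<forall>x\<in>N. \<forall>y\<in>N. x + y \<in> N) \<and> (\<forall>c. \<forall>x\<in>N. s c x \<in> N)"

context fmod
begin

lemma subsp_zero: "subsp scale N \<Longrightarrow> 0 \<in> N"
  by (simp add: subsp_def)
lemma subsp_add: "subsp scale N \<Longrightarrow> x \<in> N \<Longrightarrow> y \<in> N \<Longrightarrow> x + y \<in> N"
  by (simp add: subsp_def)
lemma subsp_scale: "subsp scale N \<Longrightarrow> x \<in> N \<Longrightarrow> scale c x \<in> N"
  by (simp add: subsp_def)
lemma subsp_neg: "subsp scale N \<Longrightarrow> x \<in> N \<Longrightarrow> - x \<in> N"
  using subsp_scale[of N x "-1"] by simp
lemma subsp_diff: "subsp scale N \<Longrightarrow> x \<in> N \<Longrightarrow> y \<in> N \<Longrightarrow> x - y \<in> N"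
  using subsp_add[of N x "-y"] subsp_neg[of N y] by simp
lemma subsp_sum: "subsp scale N \<Longrightarrow> (\<And>x. x \<in> A \<Longrightarrow> F x \<in> N) \<Longrightarrow> sum F A \<in> N"
  by (induct A rule: infinite_finite_induct) (auto simp: subsp_zero subsp_add)
lemma subsp_span: "subsp scale (span R)"
  by (simp add: subsp_def span_zero span_add span_scale)

lemma linx_hom_mod:
  assumes N: "subsp scale N"
    and add: "\<And>x y. \<Psi> (x + y) - \<Psi> x - \<Psi> y \<in> N"
    and sc: "\<And>c x. \<Psi> (s1 c x) - scale c (\<Psi> x) \<in> N"
  shows "\<Psi> (linx s1 \<phi> f) - linx scale (\<lambda>p. \<Psi> (\<phi> p)) (f::'b \<Rightarrow>\<^sub>0 'k) \<in> N"
proof -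
  have z: "\<Psi> 0 \<in> N"
    using add[of 0 0] subsp_neg[OF N] by fastforce
  have "\<Psi> (\<Sum>p\<in>S. s1 (c p) (\<phi> p)) - (\<Sum>p\<in>S. scale (c p) (\<Psi> (\<phi> p))) \<in> N" if "finite S" for S c
    using that
  proof (induct S)
    case empty then show ?case using z by simp
  next
    case (insert x F)
    let ?A = "(\<Sum>p\<in>F. s1 (c p) (\<phi> p))"
    have "\<Psi> (s1 (c x) (\<phi> x) + ?A) - (scale (c x) (\<Psi> (\<phi> x)) + (\<Sum>p\<in>F. scale (c p) (\<Psi> (\<phi> p))))
       = (\<Psi> (s1 (c x) (\<phi> x) + ?A) - \<Psi> (s1 (c x) (\<phi> x)) - \<Psi> ?A)
         + (\<Psi> (s1 (c x) (\<phi> x)) - scale (c x) (\<Psi> (\<phi> x)))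
         + (\<Psi> ?A - (\<Sum>p\<in>F. scale (c p) (\<Psi> (\<phi> p))))"
      by (simp add: algebra_simps)
    also have "\<dots> \<in> N"
      using insert add sc by (intro subsp_add[OF N]) auto
    finally show ?case using insert by simp
  qed
  then show ?thesis unfolding linx_def by simp
qed

end


section \<open>The free algebra\<close>

lemma keys_sum_sub: "Poly_Mapping.keys (sum F A) \<subseteq> (\<Union>x\<in>A. Poly_Mapping.keys (F x))"
proof (induct A rule: infinite_finite_induct)
  case (insert x F) then show ?case using keys_add by fastforce
qed auto

lemma keys_linx_sub:
  "Poly_Mapping.keys (linx smul \<phi> f) \<subseteq> (\<Union>p\<in>Poly_Mapping.keys f. Poly_Mapping.keys (\<phi> p))"
  unfolding linx_def using keys_sum_sub keys_smul by fastforce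

lemma br_linx: "br f g = linx smul (\<lambda>s. linx smul (\<lambda>t. gen (Br s t)) g) f"
  unfolding br_def linx_def SM.scale_sum_right
  by (simp add: gen_def)

lemma br_add_left: "br (f + g) h = br f h + br g h"
  by (simp add: br_linx SM.linx_add)

lemma br_add_right: "br f (g + h) = br f g + br f h"
  by (simp add: br_linx SM.linx_add SM.linx_fun_add)

lemma br_smul_left: "br (smul c f) h = smul c (br f h)"
  by (simp add: br_linx SM.linx_smul)

lemma br_smul_right: "br f (smul c h) = smul c (br f h)"
proof -
  have "br f (smul c h) = linx smul (\<lambda>s. smul c (linx smul (\<lambda>t. gen (Br s t)) h)) f"
    by (simp add: br_linx SM.linx_smul)
  also have "\<dots> = smul c (br f h)"
    unfolding br_linx
    by (rule linx_hom[symmetric]) (auto simp: SM.scale_right_distrib mult.commute)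
  finally show ?thesis .
qed

lemma br_zero_left [simp]: "br 0 h = 0"
  by (simp add: br_def)
lemma br_zero_right [simp]: "br h 0 = 0"
  by (simp add: br_def)

lemma br_neg_left: "br (- f) h = - br f h"
  using br_add_left[of "-f" f h] by (simp add: eq_neg_iff_add_eq_0)
lemma br_neg_right: "br h (- f) = - br h f"
  using br_add_right[of h "-f" f] by (simp add: eq_neg_iff_add_eq_0)
lemma br_diff_left: "br (f - g) h = br f h - br g h"
  using br_add_left[of f "-g" h] by (simp add: br_neg_left)
lemma br_diff_right: "br h (f - g) = br h f - br h g"
  using br_add_right[of h f "-g"] by (simp add: br_neg_right)

lemma br_gen [simp]: "br (gen s) (gen t) = gen (Br s t)"
  by (simp add: br_linx fmod_smul)

lemma keys_gen [simp]: "Poly_Mapping.keys (gen t :: _ \<Rightarrow>\<^sub>0 'k::field) = {t}"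
  by (simp add: gen_def)

lemma keys_br:
  fixes f g :: "'a tr \<Rightarrow>\<^sub>0 'k::field"
  shows "Poly_Mapping.keys (br f g) \<subseteq> {Br s t | s t. s \<in> Poly_Mapping.keys f \<and> t \<in> Poly_Mapping.keys g}"
proof
  fix x assume "x \<in> Poly_Mapping.keys (br f g)"
  then have "x \<in> (\<Union>p\<in>Poly_Mapping.keys f. Poly_Mapping.keys (linx smul (\<lambda>t. gen (Br p t)) g))"
    unfolding br_linx by (rule keys_linx_sub[THEN subsetD])
  then obtain s where s: "s \<in> Poly_Mapping.keys f" and x: "x \<in> Poly_Mapping.keys (linx smul (\<lambda>t. gen (Br s t)) g)"
    by blast
  from x have "x \<in> (\<Union>t\<in>Poly_Mapping.keys g. Poly_Mapping.keys (gen (Br s t) :: _ \<Rightarrow>\<^sub>0 'k))"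
    by (rule keys_linx_sub[THEN subsetD])
  then obtain t where "t \<in> Poly_Mapping.keys g" "x = Br s t"
    by auto
  with s show "x \<in> {Br s t | s t. s \<in> Poly_Mapping.keys f \<and> t \<in> Poly_Mapping.keys g}" by blast
qed

lemma FL_zero [simp]: "0 \<in> FreeL m n" by (simp add: FreeL_def)
lemma FL_add: "f \<in> FreeL m n \<Longrightarrow> g \<in> FreeL m n \<Longrightarrow> f + g \<in> FreeL m n"
  unfolding FreeL_def using keys_add[of f g] by auto
lemma FL_smul: "f \<in> FreeL m n \<Longrightarrow> smul c f \<in> FreeL m n"
  unfolding FreeL_def using keys_smul[of c f] by auto
lemma FL_neg: "f \<in> FreeL m n \<Longrightarrow> - f \<in> FreeL m n"
  unfolding FreeL_def by simp
lemma FL_diff: "f \<in> FreeL m n \<Longrightarrow> g \<in> FreeL m n \<Longrightarrow> f - g \<in> FreeL m n"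
  using FL_add[of f m n "-g"] FL_neg[of g m n] by simp
lemma FL_sum: "(\<And>x. x \<in> A \<Longrightarrow> F x \<in> FreeL m n) \<Longrightarrow> sum F A \<in> FreeL m n"
  by (induct A rule: infinite_finite_induct) (auto intro: FL_add)
lemma FL_br: "f \<in> FreeL m n \<Longrightarrow> g \<in> FreeL m n \<Longrightarrow> br f g \<in> FreeL m n"
  unfolding FreeL_def using keys_br[of f g] by auto
lemma FL_gen: "valid m n t \<Longrightarrow> gen t \<in> FreeL m n"
  by (simp add: FreeL_def)
lemma FL_v: "i \<in> idx m n \<Longrightarrow> j \<in> idx m n \<Longrightarrow> i \<noteq> j \<Longrightarrow> v i j a \<in> FreeL m n"
  by (simp add: v_def FL_gen)
lemma subsp_FL: "subsp smul (FreeL m n)"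
  by (simp add: subsp_def FL_add FL_smul)

lemma homog_zero [simp]: "homog m p 0" by (simp add: homog_def)
lemma homog_add: "homog m p f \<Longrightarrow> homog m p g \<Longrightarrow> homog m p (f + g)"
  unfolding homog_def using keys_add[of f g] by auto
lemma homog_smul: "homog m p f \<Longrightarrow> homog m p (smul c f)"
  unfolding homog_def using keys_smul[of c f] by auto
lemma homog_neg: "homog m p f \<Longrightarrow> homog m p (- f)"
  unfolding homog_def by simp
lemma homog_diff: "homog m p f \<Longrightarrow> homog m p g \<Longrightarrow> homog m p (f - g)"
  using homog_add[of m p f "-g"] homog_neg[of m p g] by simp
lemma homog_br: "homog m p f \<Longrightarrow> homog m q g \<Longrightarrow> homog m (p \<noteq> q) (br f g)"
  unfolding homog_def using keys_br[of f g] by auto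
lemma homog_v: "homog m (tau m i j) (v i j a)"
  by (simp add: homog_def v_def)


locale stlc =
  fixes sc :: "'k::field \<Rightarrow> 'a::{ring,monoid_mult} \<Rightarrow> 'a" and m n :: nat
  assumes Kalg: "K_algebra sc" and mn3: "3 \<le> m + n"
begin

sublocale SC: fmod sc
  using Kalg by (simp add: K_algebra_def fmod_def)

lemma sc_mult_left: "sc c (x * y) = sc c x * y"
  using Kalg unfolding K_algebra_def by blast
lemma sc_mult_right: "sc c (x * y) = x * sc c y"
  using Kalg unfolding K_algebra_def by blast

abbreviation I where "I \<equiv> stl_ideal sc m n"
abbreviation FL :: "('a tr \<Rightarrow>\<^sub>0 'k) set" where "FL \<equiv> FreeL m n"

lemma I_zero [simp]: "0 \<in> I"
  by (simp add: stl_ideal_def alg_ideal.zero)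
lemma I_add: "x \<in> I \<Longrightarrow> y \<in> I \<Longrightarrow> x + y \<in> I"
  by (simp add: stl_ideal_def alg_ideal.add)
lemma I_smul: "x \<in> I \<Longrightarrow> smul c x \<in> I"
  by (simp add: stl_ideal_def alg_ideal.scal)
lemma I_left: "x \<in> I \<Longrightarrow> f \<in> FL \<Longrightarrow> br f x \<in> I"
  by (simp add: stl_ideal_def alg_ideal.left)
lemma I_right: "x \<in> I \<Longrightarrow> f \<in> FL \<Longrightarrow> br x f \<in> I"
  by (simp add: stl_ideal_def alg_ideal.right)
lemma I_rel: "x \<in> stl_rels sc m n \<Longrightarrow> x \<in> I"
  by (simp add: stl_ideal_def alg_ideal.rel)
lemma subsp_I: "subsp smul I"
  by (simp add: subsp_def I_add I_smul)
lemma I_neg: "x \<in> I \<Longrightarrow> - x \<in> I"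
  by (rule SM.subsp_neg[OF subsp_I])
lemma I_diff: "x \<in> I \<Longrightarrow> y \<in> I \<Longrightarrow> x - y \<in> I"
  by (rule SM.subsp_diff[OF subsp_I])
lemma I_sum: "(\<And>x. x \<in> A \<Longrightarrow> F x \<in> I) \<Longrightarrow> sum F A \<in> I"
  by (rule SM.subsp_sum[OF subsp_I])

lemma rels_FL: "stl_rels sc m n \<subseteq> FL"
  unfolding stl_rels_def
  apply (intro subsetI)
  apply (elim UnE CollectE exE conjE)
  apply (simp_all add: FL_add FL_diff FL_br FL_smul FL_v)
  done

lemma relL: "x \<in> FL \<Longrightarrow> y \<in> FL \<Longrightarrow> z \<in> FL \<Longrightarrow> homog m p x \<Longrightarrow> homog m q y \<Longrightarrow> homog m r z \<Longrightarrow>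
  br (br x y) z - br x (br y z) + smul (sgn_par p q) (br y (br x z)) \<in> stl_rels sc m n"
  unfolding stl_rels_def by (rule UnI1, rule UnI1, rule UnI1, rule UnI1) blast

lemma relV: "i \<in> idx m n \<Longrightarrow> j \<in> idx m n \<Longrightarrow> i \<noteq> j \<Longrightarrow>
  v i j (sc c a + b) - smul c (v i j a) - v i j b \<in> stl_rels sc m n"
  unfolding stl_rels_def by (rule UnI1, rule UnI1, rule UnI1, rule UnI2) blast

lemma rel2: "{i,j,k,l} \<subseteq> idx m n \<Longrightarrow> i \<noteq> j \<Longrightarrow> k \<noteq> l \<Longrightarrow> i \<noteq> l \<Longrightarrow> j \<noteq> k \<Longrightarrow>
  br (v i j a) (v k l b) \<in> stl_rels sc m n"
  unfolding stl_rels_def by (rule UnI1, rule UnI1, rule UnI2) blast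

lemma rel3: "{i,j,l} \<subseteq> idx m n \<Longrightarrow> i \<noteq> j \<Longrightarrow> j \<noteq> l \<Longrightarrow> i \<noteq> l \<Longrightarrow>
  br (v i j a) (v j l b) - v i l (a * b) \<in> stl_rels sc m n"
  unfolding stl_rels_def by (rule UnI1, rule UnI2) blast

lemma rel4: "{i,j,k} \<subseteq> idx m n \<Longrightarrow> i \<noteq> j \<Longrightarrow> k \<noteq> i \<Longrightarrow> j \<noteq> k \<Longrightarrow>
  br (v i j a) (v k i b) + smul (sgn_par (tau m i j) (tau m k i)) (v k j (b * a)) \<in> stl_rels sc m n"
  unfolding stl_rels_def by (rule UnI2) blast

lemma I_FL: "x \<in> I \<Longrightarrow> x \<in> FL"
  unfolding stl_ideal_def
  by (induct rule: alg_ideal.induct) (use rels_FL in \<open>auto intro: FL_add FL_smul FL_br\<close>)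

definition cg :: "('a tr \<Rightarrow>\<^sub>0 'k) \<Rightarrow> ('a tr \<Rightarrow>\<^sub>0 'k) \<Rightarrow> bool" (infix "\<approx>" 50) where
  "x \<approx> y \<longleftrightarrow> x - y \<in> I"

lemma cg_refl [simp]: "x \<approx> x" by (simp add: cg_def)
lemma cg_sym: "x \<approx> y \<Longrightarrow> y \<approx> x"
  unfolding cg_def using I_neg[of "x - y"] by simp
lemma cg_trans [trans]: "x \<approx> y \<Longrightarrow> y \<approx> z \<Longrightarrow> x \<approx> z"
  unfolding cg_def using I_add[of "x - y" "y - z"] by simp
lemma cg_eq_trans [trans]: "x = y \<Longrightarrow> y \<approx> z \<Longrightarrow> x \<approx> z" by simp
lemma cg_trans_eq [trans]: "x \<approx> y \<Longrightarrow> y = z \<Longrightarrow> x \<approx> z" by simp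
lemma cg_add: "x \<approx> x' \<Longrightarrow> y \<approx> y' \<Longrightarrow> x + y \<approx> x' + y'"
proof -
  assume a: "x \<approx> x'" "y \<approx> y'"
  have "x + y - (x' + y') = (x - x') + (y - y')" by simp
  with a show ?thesis unfolding cg_def using I_add by metis
qed
lemma cg_diff: "x \<approx> x' \<Longrightarrow> y \<approx> y' \<Longrightarrow> x - y \<approx> x' - y'"
proof -
  assume a: "x \<approx> x'" "y \<approx> y'"
  have "x - y - (x' - y') = (x - x') - (y - y')" by simp
  with a show ?thesis unfolding cg_def using I_diff by metis
qed
lemma cg_neg: "x \<approx> x' \<Longrightarrow> - x \<approx> - x'"
  using cg_diff[of 0 0 x x'] by simp
lemma cg_smul: "x \<approx> x' \<Longrightarrow> smul c x \<approx> smul c x'"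
  unfolding cg_def using I_smul[of "x - x'" c] by (simp add: SM.scale_right_diff_distrib)
lemma cg_I: "x \<in> I \<Longrightarrow> x \<approx> 0" by (simp add: cg_def)
lemma cg_I_iff: "x \<approx> 0 \<longleftrightarrow> x \<in> I" by (simp add: cg_def)
lemma cg_brL: "x \<approx> x' \<Longrightarrow> f \<in> FL \<Longrightarrow> br x f \<approx> br x' f"
  unfolding cg_def using I_right[of "x - x'" f] by (simp add: br_diff_left)
lemma cg_brR: "x \<approx> x' \<Longrightarrow> f \<in> FL \<Longrightarrow> br f x \<approx> br f x'"
  unfolding cg_def using I_left[of "x - x'" f] by (simp add: br_diff_right)
lemma cg_br: "x \<approx> x' \<Longrightarrow> y \<approx> y' \<Longrightarrow> x' \<in> FL \<Longrightarrow> y \<in> FL \<Longrightarrow> br x y \<approx> br x' y'"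
  using cg_brL[of x x' y] cg_brR[of y y' x'] cg_trans by blast
lemma cg_sum: "(\<And>x. x \<in> A \<Longrightarrow> F x \<approx> G x) \<Longrightarrow> sum F A \<approx> sum G A"
  by (induct A rule: infinite_finite_induct) (auto intro: cg_add)

lemma LZ:
  assumes "x \<in> FL" "y \<in> FL" "z \<in> FL" "homog m p x" "homog m q y" "homog m r z"
  shows "br (br x y) z \<approx> br x (br y z) - smul (sgn_par p q) (br y (br x z))"
proof -
  have "br (br x y) z - br x (br y z) + smul (sgn_par p q) (br y (br x z)) \<in> I"
    by (rule I_rel, rule relL) (use assms in auto)
  then show ?thesis by (simp add: cg_def algebra_simps)
qed

lemma LZ':
  assumes "x \<in> FL" "y \<in> FL" "z \<in> FL" "homog m p x" "homog m q y" "homog m r z"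
  shows "br x (br y z) \<approx> br (br x y) z + smul (sgn_par p q) (br y (br x z))"
proof -
  have "br (br x y) z - br x (br y z) + smul (sgn_par p q) (br y (br x z)) \<in> I"
    by (rule I_rel, rule relL) (use assms in auto)
  then have "- (br (br x y) z - br x (br y z) + smul (sgn_par p q) (br y (br x z))) \<in> I"
    by (rule I_neg)
  then show ?thesis by (simp add: cg_def algebra_simps)
qed

definition vld :: "nat \<Rightarrow> nat \<Rightarrow> bool" where
  "vld i j \<longleftrightarrow> i \<in> idx m n \<and> j \<in> idx m n \<and> i \<noteq> j"

lemma FLv: "vld i j \<Longrightarrow> v i j a \<in> FL"
  by (simp add: vld_def FL_v)

lemma v_lin: "vld i j \<Longrightarrow> v i j (sc c a + b) \<approx> smul c (v i j a) + v i j b"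
proof -
  assume "vld i j"
  then have "v i j (sc c a + b) - smul c (v i j a) - v i j b \<in> I"
    by (intro I_rel relV) (auto simp: vld_def)
  then show ?thesis by (simp add: cg_def algebra_simps)
qed

lemma v_add: "vld i j \<Longrightarrow> v i j (a + b) \<approx> v i j a + v i j b"
  using v_lin[of i j 1 a b] by simp

lemma v_zero: "vld i j \<Longrightarrow> v i j 0 \<approx> 0"
  using v_add[of i j 0 0] I_neg[of "- v i j 0"] by (simp add: cg_def)

lemma v_sc: "vld i j \<Longrightarrow> v i j (sc c a) \<approx> smul c (v i j a)"
  using v_lin[of i j c a 0] v_zero[of i j] by (metis add.right_neutral cg_add cg_refl cg_trans)

lemma v_neg: "vld i j \<Longrightarrow> v i j (- a) \<approx> - v i j a"
  using v_sc[of i j "-1" a] by simp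

lemma v_diff: "vld i j \<Longrightarrow> v i j (a - b) \<approx> v i j a - v i j b"
  using v_add[of i j a "-b"] v_neg[of i j b]
  by (metis cg_add cg_refl cg_trans diff_conv_add_uminus)

lemma R2: "vld i j \<Longrightarrow> vld k l \<Longrightarrow> i \<noteq> l \<Longrightarrow> j \<noteq> k \<Longrightarrow> br (v i j a) (v k l b) \<approx> 0"
  by (rule cg_I, rule I_rel, rule rel2) (auto simp: vld_def)

lemma R3: "vld i j \<Longrightarrow> vld j l \<Longrightarrow> i \<noteq> l \<Longrightarrow> br (v i j a) (v j l b) \<approx> v i l (a * b)"
proof -
  assume "vld i j" "vld j l" "i \<noteq> l"
  then have "br (v i j a) (v j l b) - v i l (a * b) \<in> I"
    by (intro I_rel rel3) (auto simp: vld_def)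
  then show ?thesis by (simp add: cg_def)
qed

lemma R4: "vld i j \<Longrightarrow> vld k i \<Longrightarrow> j \<noteq> k \<Longrightarrow>
   br (v i j a) (v k i b) \<approx> - smul (sgn_par (tau m i j) (tau m k i)) (v k j (b * a))"
proof -
  assume "vld i j" "vld k i" "j \<noteq> k"
  then have "br (v i j a) (v k i b) + smul (sgn_par (tau m i j) (tau m k i)) (v k j (b * a)) \<in> I"
    by (intro I_rel rel4) (auto simp: vld_def)
  then show ?thesis by (simp add: cg_def)
qed

end


definition sg :: "bool \<Rightarrow> 'r::ab_group_add \<Rightarrow> 'r" where
  "sg b x = (if b then - x else x)"

lemma sg_simps [simp]: "sg False x = x" "sg True x = - x" "sg b 0 = 0"
  by (auto simp: sg_def)

lemma sg_sum: "sg b (sum F A) = (\<Sum>x\<in>A. sg b (F x))"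
  by (auto simp: sg_def sum_negf)

lemma sg_mult_left: "sg b (x * y) = sg b x * (y::'r::ring)"
  by (auto simp: sg_def)
lemma sg_mult_right: "sg b (x * y) = x * sg b (y::'r::ring)"
  by (auto simp: sg_def)

lemma tau_trans: "tau m r s = (tau m r k \<noteq> tau m k s)"
  by (auto simp: tau_def)
lemma tau_sym: "tau m r s = tau m s r"
  by (auto simp: tau_def)
lemma tau_refl [simp]: "tau m r r = False"
  by (auto simp: tau_def)

context stlc
begin

lemma sg_sc: "sg b (sc c x) = sc c (sg b x)"
  by (auto simp: sg_def)

definition Bm :: "'a mat \<Rightarrow> 'a mat \<Rightarrow> 'a mat" where
  "Bm X Y = (\<lambda>r s. (\<Sum>k\<in>idx m n. X r k * Y k s) - (\<Sum>k\<in>idx m n. sg (tau m r k \<and> tau m k s) (Y r k * X k s)))"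

definition homM :: "bool \<Rightarrow> 'a mat \<Rightarrow> bool" where
  "homM p X \<longleftrightarrow> (\<forall>r s. X r s \<noteq> 0 \<longrightarrow> tau m r s = p)"

definition supM :: "'a mat \<Rightarrow> bool" where
  "supM X \<longleftrightarrow> (\<forall>r s. X r s \<noteq> 0 \<longrightarrow> r \<in> idx m n \<and> s \<in> idx m n)"

lemma mult_nz: "x * y \<noteq> (0::'a) \<Longrightarrow> x \<noteq> 0 \<and> y \<noteq> 0"
  by auto

lemma sbr_Bm:
  assumes "homM p X" "homM q Y"
  shows "sbr m n p q X Y = Bm X Y"
proof (intro ext)
  fix r s
  have "(if p \<and> q then - mmul m n Y X r s else mmul m n Y X r s)
      = (\<Sum>k\<in>idx m n. sg (p \<and> q) (Y r k * X k s))"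
    by (cases p; cases q) (simp_all add: mmul_def sum_negf sg_def)
  also have "\<dots> = (\<Sum>k\<in>idx m n. sg (tau m r k \<and> tau m k s) (Y r k * X k s))"
  proof (rule sum.cong)
    fix k
    show "sg (p \<and> q) (Y r k * X k s) = sg (tau m r k \<and> tau m k s) (Y r k * X k s)"
    proof (cases "Y r k * X k s = 0")
      case False
      then have "Y r k \<noteq> 0" "X k s \<noteq> 0" by auto
      with assms have "tau m r k = q" "tau m k s = p" by (auto simp: homM_def)
      then show ?thesis by (auto simp: sg_def)
    qed simp
  qed simp
  finally show "sbr m n p q X Y r s = Bm X Y r s"
    by (simp add: sbr_def Bm_def mmul_def)
qed

lemma homM_Bm:
  assumes "homM p X" "homM q Y"
  shows "homM (p \<noteq> q) (Bm X Y)"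
  unfolding homM_def
proof (intro allI impI)
  fix r s assume nz: "Bm X Y r s \<noteq> 0"
  show "tau m r s = (p \<noteq> q)"
  proof (rule ccontr)
    assume ne: "tau m r s \<noteq> (p \<noteq> q)"
    have "X r k * Y k s = 0" for k
    proof (rule ccontr)
      assume "X r k * Y k s \<noteq> 0"
      then have "X r k \<noteq> 0" "Y k s \<noteq> 0" by auto
      with assms have "tau m r k = p" "tau m k s = q" by (auto simp: homM_def)
      with ne tau_trans[of m r s k] show False by simp
    qed
    moreover have "Y r k * X k s = 0" for k
    proof (rule ccontr)
      assume "Y r k * X k s \<noteq> 0"
      then have "Y r k \<noteq> 0" "X k s \<noteq> 0" by auto
      with assms have "tau m r k = q" "tau m k s = p" by (auto simp: homM_def)
      with ne tau_trans[of m r s k] show False by auto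
    qed
    ultimately have "Bm X Y r s = 0" by (simp add: Bm_def)
    with nz show False by simp
  qed
qed

lemma supM_Bm:
  assumes "supM X" "supM Y"
  shows "supM (Bm X Y)"
  unfolding supM_def
proof (intro allI impI)
  fix r s assume nz: "Bm X Y r s \<noteq> 0"
  show "r \<in> idx m n \<and> s \<in> idx m n"
  proof (rule ccontr)
    assume ne: "\<not> (r \<in> idx m n \<and> s \<in> idx m n)"
    have "X r k * Y k s = 0" for k
    proof (rule ccontr)
      assume "X r k * Y k s \<noteq> 0"
      then have "X r k \<noteq> 0" "Y k s \<noteq> 0" by auto
      with assms ne show False by (auto simp: supM_def)
    qed
    moreover have "Y r k * X k s = 0" for k
    proof (rule ccontr)
      assume "Y r k * X k s \<noteq> 0"
      then have "Y r k \<noteq> 0" "X k s \<noteq> 0" by auto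
      with assms ne show False by (auto simp: supM_def)
    qed
    ultimately have "Bm X Y r s = 0" by (simp add: Bm_def)
    with nz show False by simp
  qed
qed

lemma homM_Emat: "homM (tau m i j) (Emat i j a)"
  by (simp add: homM_def Emat_def)

lemma mev_hom: "homM (deg m t) (mev m n t)"
proof (induct t)
  case (Gen i j a) then show ?case by (simp add: homM_Emat)
next
  case (Br s t)
  have "homM (deg m s \<noteq> deg m t) (Bm (mev m n s) (mev m n t))"
    by (rule homM_Bm) (fact Br)+
  then show ?case by (simp only: mev.simps deg.simps sbr_Bm[OF Br(1) Br(2)])
qed

lemma mev_Br: "mev m n (Br s t) = Bm (mev m n s) (mev m n t)"
  by (simp add: sbr_Bm mev_hom)

lemma mev_sup: "valid m n t \<Longrightarrow> supM (mev m n t)"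
proof (induct t)
  case (Gen i j a) then show ?case by (simp add: supM_def Emat_def)
next
  case (Br s t) then show ?case unfolding mev_Br by (intro supM_Bm) auto
qed

lemma Bm_linL:
  assumes "\<And>r s. X r s = (\<Sum>p\<in>P. sc (c p) (Xp p r s))"
  shows "Bm X Y r s = (\<Sum>p\<in>P. sc (c p) (Bm (Xp p) Y r s))"
proof -
  have A: "(\<Sum>k\<in>idx m n. X r k * Y k s) = (\<Sum>p\<in>P. sc (c p) (\<Sum>k\<in>idx m n. Xp p r k * Y k s))"
    unfolding assms
    by (simp add: sum_distrib_right sc_mult_left[symmetric] SC.scale_sum_right sum.swap[of _ P])
  have B: "(\<Sum>k\<in>idx m n. sg (tau m r k \<and> tau m k s) (Y r k * X k s))
      = (\<Sum>p\<in>P. sc (c p) (\<Sum>k\<in>idx m n. sg (tau m r k \<and> tau m k s) (Y r k * Xp p k s)))"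
    unfolding assms
    by (simp add: sum_distrib_left sc_mult_right[symmetric] SC.scale_sum_right sg_sum sg_sc sum.swap[of _ P])
  show ?thesis
    unfolding Bm_def A B by (simp add: SC.scale_right_diff_distrib sum_subtractf)
qed

lemma Bm_linR:
  assumes "\<And>r s. Y r s = (\<Sum>p\<in>P. sc (c p) (Yp p r s))"
  shows "Bm X Y r s = (\<Sum>p\<in>P. sc (c p) (Bm X (Yp p) r s))"
proof -
  have A: "(\<Sum>k\<in>idx m n. X r k * Y k s) = (\<Sum>p\<in>P. sc (c p) (\<Sum>k\<in>idx m n. X r k * Yp p k s))"
    unfolding assms
    by (simp add: sum_distrib_left sc_mult_right[symmetric] SC.scale_sum_right sum.swap[of _ P])
  have B: "(\<Sum>k\<in>idx m n. sg (tau m r k \<and> tau m k s) (Y r k * X k s))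
      = (\<Sum>p\<in>P. sc (c p) (\<Sum>k\<in>idx m n. sg (tau m r k \<and> tau m k s) (Yp p r k * X k s)))"
    unfolding assms
    by (simp add: sum_distrib_right sc_mult_left[symmetric] SC.scale_sum_right sg_sum sg_sc sum.swap[of _ P])
  show ?thesis
    unfolding Bm_def A B by (simp add: SC.scale_right_diff_distrib sum_subtractf)
qed

abbreviation ev where "ev \<equiv> evalF sc m n"

lemma ev_linx: "ev f r s = linx sc (\<lambda>t. mev m n t r s) f"
  by (simp add: evalF_def linx_def)

lemma ev_add: "ev (f + g) r s = ev f r s + ev g r s"
  by (simp add: ev_linx SC.linx_add)
lemma ev_smul: "ev (smul c f) r s = sc c (ev f r s)"
  by (simp add: ev_linx SC.linx_smul)
lemma ev_zero [simp]: "ev 0 r s = 0"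
  by (simp add: ev_linx)
lemma ev_neg: "ev (- f) r s = - ev f r s"
  by (simp add: ev_linx SC.linx_uminus)
lemma ev_diff: "ev (f - g) r s = ev f r s - ev g r s"
  by (simp add: ev_linx SC.linx_diff)
lemma ev_sum: "ev (sum F A) r s = (\<Sum>x\<in>A. ev (F x) r s)"
  by (simp add: ev_linx SC.linx_sum)
lemma ev_gen [simp]: "ev (gen t) r s = mev m n t r s"
  by (simp add: ev_linx linx_gen SC.fmod_axioms)
lemma ev_v [simp]: "ev (v i j a) r s = Emat i j a r s"
  by (simp add: v_def)

lemma ev_br: "ev (br f g) r s = Bm (ev f) (ev g) r s"
proof -
  have h: "ev (linx smul \<phi> h) r s = linx sc (\<lambda>p. ev (\<phi> p) r s) h" for \<phi> and h :: "'x \<Rightarrow>\<^sub>0 'k"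
    by (rule linx_hom) (simp_all add: ev_add ev_smul)
  have "ev (br f g) r s = linx sc (\<lambda>s'. linx sc (\<lambda>t'. mev m n (Br s' t') r s) g) f"
    unfolding br_linx h by simp
  also have "\<dots> = linx sc (\<lambda>s'. Bm (mev m n s') (ev g) r s) f"
    unfolding mev_Br
    by (rule arg_cong[where f = "\<lambda>F. linx sc F f"], rule ext, subst Bm_linR[of "ev g"])
       (auto simp: evalF_def linx_def)
  also have "\<dots> = Bm (ev f) (ev g) r s"
    by (subst Bm_linL[of "ev f"]) (auto simp: evalF_def linx_def)
  finally show ?thesis .
qed

lemma ev_hom: "homog m p f \<Longrightarrow> homM p (ev f)"
  unfolding homM_def homog_def
proof (intro allI impI)
  fix r s assume h: "\<forall>t\<in>Poly_Mapping.keys f. deg m t = p" and nz: "ev f r s \<noteq> 0"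
  then obtain t where "t \<in> Poly_Mapping.keys f" "sc (Poly_Mapping.lookup f t) (mev m n t r s) \<noteq> 0"
    unfolding evalF_def by (meson sum.neutral)
  moreover from this(2) have "mev m n t r s \<noteq> 0" by (metis SC.scale_zero_right)
  ultimately show "tau m r s = p" using h mev_hom[of t] by (auto simp: homM_def)
qed

lemma ev_sup: "f \<in> FL \<Longrightarrow> supM (ev f)"
  unfolding supM_def FreeL_def
proof (intro allI impI)
  fix r s assume h: "f \<in> {f. \<forall>t\<in>Poly_Mapping.keys f. valid m n t}" and nz: "ev f r s \<noteq> 0"
  then obtain t where "t \<in> Poly_Mapping.keys f" "sc (Poly_Mapping.lookup f t) (mev m n t r s) \<noteq> 0"
    unfolding evalF_def by (meson sum.neutral)
  moreover from this(2) have "mev m n t r s \<noteq> 0" by (metis SC.scale_zero_right)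
  ultimately show "r \<in> idx m n \<and> s \<in> idx m n" using h mev_sup[of t] by (auto simp: supM_def)
qed

end


context stlc
begin

abbreviation N :: "('a \<times> 'a \<Rightarrow>\<^sub>0 'k) set" where "N \<equiv> tensor_null sc"
abbreviation Bd :: "('a \<times> 'a \<Rightarrow>\<^sub>0 'k) set" where "Bd \<equiv> HH1_bounds sc"

lemma subsp_N: "subsp smul N"
  unfolding tensor_null_def by (rule SM.subsp_span)

definition cn :: "('a \<times> 'a \<Rightarrow>\<^sub>0 'k) \<Rightarrow> ('a \<times> 'a \<Rightarrow>\<^sub>0 'k) \<Rightarrow> bool" (infix "\<simeq>" 50) where
  "x \<simeq> y \<longleftrightarrow> x - y \<in> N"

lemma N_zero [simp]: "0 \<in> N" by (rule SM.subsp_zero[OF subsp_N])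
lemma N_add: "x \<in> N \<Longrightarrow> y \<in> N \<Longrightarrow> x + y \<in> N" by (rule SM.subsp_add[OF subsp_N])
lemma N_diff: "x \<in> N \<Longrightarrow> y \<in> N \<Longrightarrow> x - y \<in> N" by (rule SM.subsp_diff[OF subsp_N])
lemma N_neg: "x \<in> N \<Longrightarrow> - x \<in> N" by (rule SM.subsp_neg[OF subsp_N])
lemma N_smul: "x \<in> N \<Longrightarrow> smul c x \<in> N" by (rule SM.subsp_scale[OF subsp_N])
lemma N_sum: "(\<And>x. x \<in> A \<Longrightarrow> F x \<in> N) \<Longrightarrow> sum F A \<in> N" by (rule SM.subsp_sum[OF subsp_N])

lemma cn_refl [simp]: "x \<simeq> x" by (simp add: cn_def)
lemma cn_sym: "x \<simeq> y \<Longrightarrow> y \<simeq> x"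
  unfolding cn_def using N_neg[of "x - y"] by simp
lemma cn_trans [trans]: "x \<simeq> y \<Longrightarrow> y \<simeq> z \<Longrightarrow> x \<simeq> z"
  unfolding cn_def using N_add[of "x - y" "y - z"] by simp
lemma cn_eq_trans [trans]: "x = y \<Longrightarrow> y \<simeq> z \<Longrightarrow> x \<simeq> z" by simp
lemma cn_trans_eq [trans]: "x \<simeq> y \<Longrightarrow> y = z \<Longrightarrow> x \<simeq> z" by simp
lemma cn_add: "x \<simeq> x' \<Longrightarrow> y \<simeq> y' \<Longrightarrow> x + y \<simeq> x' + y'"
proof -
  assume a: "x \<simeq> x'" "y \<simeq> y'"
  have "x + y - (x' + y') = (x - x') + (y - y')" by simp
  with a show ?thesis unfolding cn_def using N_add by metis
qed
lemma cn_diff: "x \<simeq> x' \<Longrightarrow> y \<simeq> y' \<Longrightarrow> x - y \<simeq> x' - y'"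
proof -
  assume a: "x \<simeq> x'" "y \<simeq> y'"
  have "x - y - (x' - y') = (x - x') - (y - y')" by simp
  with a show ?thesis unfolding cn_def using N_diff by metis
qed
lemma cn_neg: "x \<simeq> x' \<Longrightarrow> - x \<simeq> - x'"
  using cn_diff[of 0 0 x x'] by simp
lemma cn_smul: "x \<simeq> x' \<Longrightarrow> smul c x \<simeq> smul c x'"
  unfolding cn_def using N_smul[of "x - x'" c] by (simp add: SM.scale_right_diff_distrib)
lemma cn_sg: "x \<simeq> x' \<Longrightarrow> sg b x \<simeq> sg b x'"
  by (cases b) (auto intro: cn_neg)
lemma cn_sum: "(\<And>x. x \<in> A \<Longrightarrow> F x \<simeq> G x) \<Longrightarrow> sum F A \<simeq> sum G A"
  by (induct A rule: infinite_finite_induct) (auto intro: cn_add)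
lemma cn_N: "x \<in> N \<Longrightarrow> x \<simeq> 0" by (simp add: cn_def)

lemma bil_in: "x \<in> bilin_rels sc \<Longrightarrow> x \<in> N"
  unfolding tensor_null_def by (rule SM.span_base)

lemma gN_addL: "gen (a + a', b) \<simeq> gen (a, b) + gen (a', b)"
proof -
  have "gen (a + a', b) - gen (a, b) - gen (a', b) \<in> N"
    by (rule bil_in) (unfold bilin_rels_def, blast)
  then show ?thesis by (simp add: cn_def diff_diff_eq)
qed
lemma gN_addR: "gen (a, b + b') \<simeq> gen (a, b) + gen (a, b')"
proof -
  have "gen (a, b + b') - gen (a, b) - gen (a, b') \<in> N"
    by (rule bil_in) (unfold bilin_rels_def, blast)
  then show ?thesis by (simp add: cn_def diff_diff_eq)
qed
lemma gN_scL: "gen (sc c a, b) \<simeq> smul c (gen (a, b))"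
proof -
  have "gen (sc c a, b) - smul c (gen (a, b)) \<in> N"
    by (rule bil_in) (unfold bilin_rels_def, blast)
  then show ?thesis by (simp add: cn_def)
qed
lemma gN_scR: "gen (a, sc c b) \<simeq> smul c (gen (a, b))"
proof -
  have "gen (a, sc c b) - smul c (gen (a, b)) \<in> N"
    by (rule bil_in) (unfold bilin_rels_def, blast)
  then show ?thesis by (simp add: cn_def)
qed
lemma gN_zeroL: "gen (0, b) \<simeq> 0"
  using gN_addL[of 0 0 b] N_neg[of "- gen (0, b)"] by (simp add: cn_def)
lemma gN_zeroR: "gen (a, 0) \<simeq> 0"
  using gN_addR[of a 0 0] N_neg[of "- gen (a, 0)"] by (simp add: cn_def)
lemma gN_negL: "gen (- a, b) \<simeq> - gen (a, b)"
  using gN_scL[of "-1" a b] by simp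
lemma gN_negR: "gen (a, - b) \<simeq> - gen (a, b)"
  using gN_scR[of a "-1" b] by simp
lemma gN_diffL: "gen (a - a', b) \<simeq> gen (a, b) - gen (a', b)"
  using gN_addL[of a "-a'" b] cn_add[OF cn_refl gN_negL[of a' b], of "gen (a, b)"]
  by (simp add: cn_trans)
lemma gN_diffR: "gen (a, b - b') \<simeq> gen (a, b) - gen (a, b')"
  using gN_addR[of a b "-b'"] cn_add[OF cn_refl gN_negR[of a b'], of "gen (a, b)"]
  by (simp add: cn_trans)
lemma gN_sgL: "gen (sg \<beta> a, b) \<simeq> sg \<beta> (gen (a, b))"
  by (cases \<beta>) (simp_all add: gN_negL)
lemma gN_sgR: "gen (a, sg \<beta> b) \<simeq> sg \<beta> (gen (a, b))"
  by (cases \<beta>) (simp_all add: gN_negR)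
lemma gN_sumL: "gen (sum F A, b) \<simeq> (\<Sum>x\<in>A. gen (F x, b))"
proof (induct A rule: infinite_finite_induct)
  case (insert x F')
  then show ?case
    by (simp) (meson cn_add cn_refl cn_trans gN_addL)
qed (simp_all add: gN_zeroL)
lemma gN_sumR: "gen (a, sum F A) \<simeq> (\<Sum>x\<in>A. gen (a, F x))"
proof (induct A rule: infinite_finite_induct)
  case (insert x F')
  then show ?case
    by (simp) (meson cn_add cn_refl cn_trans gN_addR)
qed (simp_all add: gN_zeroR)

lemma gN_scsumL: "gen (\<Sum>p\<in>P. sc (c p) (F p), b) \<simeq> (\<Sum>p\<in>P. smul (c p) (gen (F p, b)))"
proof -
  have "gen (\<Sum>p\<in>P. sc (c p) (F p), b) \<simeq> (\<Sum>p\<in>P. gen (sc (c p) (F p), b))" by (rule gN_sumL)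
  also have "\<dots> \<simeq> (\<Sum>p\<in>P. smul (c p) (gen (F p, b)))" by (rule cn_sum, rule gN_scL)
  finally show ?thesis .
qed
lemma gN_scsumR: "gen (a, \<Sum>p\<in>P. sc (c p) (F p)) \<simeq> (\<Sum>p\<in>P. smul (c p) (gen (a, F p)))"
proof -
  have "gen (a, \<Sum>p\<in>P. sc (c p) (F p)) \<simeq> (\<Sum>p\<in>P. gen (a, sc (c p) (F p)))" by (rule gN_sumR)
  also have "\<dots> \<simeq> (\<Sum>p\<in>P. smul (c p) (gen (a, F p)))" by (rule cn_sum, rule gN_scR)
  finally show ?thesis .
qed

subsection \<open>The cocycle om\<close>

definition dl :: "nat \<Rightarrow> 'k" where "dl i = (if i \<le> m then 1 else -1)"

lemma dl_tau: "dl r * (if tau m r k then -1 else 1) = dl k"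
  by (auto simp: dl_def tau_def)

definition om :: "'a mat \<Rightarrow> 'a mat \<Rightarrow> ('a \<times> 'a \<Rightarrow>\<^sub>0 'k)" where
  "om X Y = (\<Sum>r\<in>idx m n. \<Sum>s\<in>idx m n. smul (dl r) (gen (X r s, Y s r)))"

lemma om_linL:
  assumes "\<And>r s. X r s = (\<Sum>p\<in>P. sc (c p) (Xp p r s))"
  shows "om X Y \<simeq> (\<Sum>p\<in>P. smul (c p) (om (Xp p) Y))"
proof -
  have "om X Y \<simeq> (\<Sum>r\<in>idx m n. \<Sum>s\<in>idx m n. smul (dl r) (\<Sum>p\<in>P. smul (c p) (gen (Xp p r s, Y s r))))"
    unfolding om_def assms by (intro cn_sum cn_smul gN_scsumL)
  also have "\<dots> = (\<Sum>p\<in>P. smul (c p) (om (Xp p) Y))"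
    unfolding om_def SM.scale_sum_right
    by (simp add: sum.swap[of _ P] SM.scale_sum_right mult.commute)
  finally show ?thesis .
qed

lemma om_linR:
  assumes "\<And>r s. Y r s = (\<Sum>p\<in>P. sc (c p) (Yp p r s))"
  shows "om X Y \<simeq> (\<Sum>p\<in>P. smul (c p) (om X (Yp p)))"
proof -
  have "om X Y \<simeq> (\<Sum>r\<in>idx m n. \<Sum>s\<in>idx m n. smul (dl r) (\<Sum>p\<in>P. smul (c p) (gen (X r s, Yp p s r))))"
    unfolding om_def assms by (intro cn_sum cn_smul gN_scsumR)
  also have "\<dots> = (\<Sum>p\<in>P. smul (c p) (om X (Yp p)))"
    unfolding om_def SM.scale_sum_right
    by (simp add: sum.swap[of _ P] SM.scale_sum_right mult.commute)
  finally show ?thesis .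
qed

definition Omt :: "'a tr \<Rightarrow> ('a \<times> 'a \<Rightarrow>\<^sub>0 'k)" where
  "Omt t = (case t of Gen i j a \<Rightarrow> 0 | Br s t \<Rightarrow> om (mev m n s) (mev m n t))"

definition Om :: "('a tr \<Rightarrow>\<^sub>0 'k) \<Rightarrow> ('a \<times> 'a \<Rightarrow>\<^sub>0 'k)" where
  "Om f = linx smul Omt f"

lemma Om_add: "Om (f + g) = Om f + Om g" by (simp add: Om_def SM.linx_add)
lemma Om_smul: "Om (smul c f) = smul c (Om f)" by (simp add: Om_def SM.linx_smul)
lemma Om_diff: "Om (f - g) = Om f - Om g" by (simp add: Om_def SM.linx_diff)
lemma Om_neg: "Om (- f) = - Om f" by (simp add: Om_def SM.linx_uminus)
lemma Om_zero [simp]: "Om 0 = 0" by (simp add: Om_def)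
lemma Om_sum: "Om (sum F A) = (\<Sum>x\<in>A. Om (F x))" by (simp add: Om_def SM.linx_sum)
lemma Om_gen: "Om (gen t) = Omt t" by (simp add: Om_def fmod_smul)
lemma Om_v [simp]: "Om (v i j a) = 0" by (simp add: v_def Om_gen Omt_def)

lemma linx_cn: "(\<And>p. \<phi> p \<simeq> \<psi> p) \<Longrightarrow> linx smul \<phi> f \<simeq> linx smul \<psi> f"
  unfolding linx_def by (intro cn_sum cn_smul) auto

lemma Om_br: "Om (br f g) \<simeq> om (ev f) (ev g)"
proof -
  have h: "Om (linx smul \<phi> h) = linx smul (\<lambda>p. Om (\<phi> p)) h" for \<phi> and h :: "'x \<Rightarrow>\<^sub>0 'k"
    by (rule linx_hom) (simp_all add: Om_add Om_smul)
  have "Om (br f g) = linx smul (\<lambda>s'. linx smul (\<lambda>t'. om (mev m n s') (mev m n t')) g) f"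
    unfolding br_linx h by (simp add: Om_gen Omt_def)
  also have "\<dots> \<simeq> linx smul (\<lambda>s'. om (mev m n s') (ev g)) f"
  proof (rule linx_cn)
    fix s'
    have "om (mev m n s') (ev g) \<simeq> linx smul (\<lambda>t'. om (mev m n s') (mev m n t')) g"
      unfolding linx_def by (rule om_linR) (simp add: evalF_def)
    then show "linx smul (\<lambda>t'. om (mev m n s') (mev m n t')) g \<simeq> om (mev m n s') (ev g)"
      by (rule cn_sym)
  qed
  also have "linx smul (\<lambda>s'. om (mev m n s') (ev g)) f \<simeq> om (ev f) (ev g)"
    unfolding linx_def by (rule cn_sym, rule om_linL) (simp add: evalF_def)
  finally show ?thesis .
qed

definition d2t :: "'a \<times> 'a \<times> 'a \<Rightarrow> ('a \<times> 'a \<Rightarrow>\<^sub>0 'k)" where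
  "d2t q = (case q of (a0, a1, a2) \<Rightarrow> gen (a0 * a1, a2) - gen (a0, a1 * a2) - gen (a1, a2 * a0))"

lemma d2_linx: "d2 g = linx smul d2t g"
  unfolding d2_def linx_def d2t_def
  by (rule sum.cong) (auto split: prod.split)

lemma Bd_iff: "x \<in> Bd \<longleftrightarrow> (\<exists>g b. x = d2 g + b \<and> b \<in> N)"
  by (simp add: HH1_bounds_def)

lemma Bd_add0: "x \<in> Bd \<Longrightarrow> y \<in> Bd \<Longrightarrow> x + y \<in> Bd"
proof -
  assume "x \<in> Bd" "y \<in> Bd"
  then obtain g b g' b' where "x = d2 g + b" "b \<in> N" "y = d2 g' + b'" "b' \<in> N"
    unfolding Bd_iff by auto
  then have "x + y = d2 (g + g') + (b + b')" "b + b' \<in> N"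
    by (simp_all add: d2_linx SM.linx_add N_add)
  then show ?thesis unfolding Bd_iff by blast
qed

lemma Bd_smul0: "x \<in> Bd \<Longrightarrow> smul c x \<in> Bd"
proof -
  assume "x \<in> Bd"
  then obtain g b where "x = d2 g + b" "b \<in> N"
    unfolding Bd_iff by auto
  then have "smul c x = d2 (smul c g) + smul c b" "smul c b \<in> N"
    by (simp_all add: d2_linx SM.linx_smul N_smul SM.scale_right_distrib)
  then show ?thesis unfolding Bd_iff by blast
qed

lemma Bd_zero0: "0 \<in> Bd"
proof -
  have "(0::('a \<times> 'a \<Rightarrow>\<^sub>0 'k)) = d2 0 + 0" by (simp add: d2_linx)
  then show ?thesis unfolding Bd_iff using N_zero by blast
qed

lemma subsp_Bd: "subsp smul Bd"
  by (simp add: subsp_def Bd_add0 Bd_smul0 Bd_zero0)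

lemma Bd_zero [simp]: "0 \<in> Bd" by (rule SM.subsp_zero[OF subsp_Bd])
lemma Bd_add: "x \<in> Bd \<Longrightarrow> y \<in> Bd \<Longrightarrow> x + y \<in> Bd" by (rule SM.subsp_add[OF subsp_Bd])
lemma Bd_diff: "x \<in> Bd \<Longrightarrow> y \<in> Bd \<Longrightarrow> x - y \<in> Bd" by (rule SM.subsp_diff[OF subsp_Bd])
lemma Bd_neg: "x \<in> Bd \<Longrightarrow> - x \<in> Bd" by (rule SM.subsp_neg[OF subsp_Bd])
lemma Bd_smul: "x \<in> Bd \<Longrightarrow> smul c x \<in> Bd" by (rule SM.subsp_scale[OF subsp_Bd])
lemma Bd_sum: "(\<And>x. x \<in> A \<Longrightarrow> F x \<in> Bd) \<Longrightarrow> sum F A \<in> Bd" by (rule SM.subsp_sum[OF subsp_Bd])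

lemma N_Bd: "x \<in> N \<Longrightarrow> x \<in> Bd"
proof -
  assume "x \<in> N"
  moreover have "x = d2 0 + x" by (simp add: d2_linx)
  ultimately show ?thesis unfolding Bd_iff by blast
qed

lemma d2t_Bd: "gen (a0 * a1, a2) - gen (a0, a1 * a2) - gen (a1, a2 * a0) \<in> Bd"
proof -
  have "d2 (gen (a0, a1, a2)) = d2t (a0, a1, a2)"
    unfolding d2_linx by (rule linx_gen[OF fmod_smul])
  then have "d2 (gen (a0, a1, a2)) + 0 = (gen (a0 * a1, a2) - gen (a0, a1 * a2) - gen (a1, a2 * a0) :: ('a \<times> 'a \<Rightarrow>\<^sub>0 'k))"
    by (simp add: d2t_def)
  then show ?thesis unfolding Bd_iff using N_zero by metis
qed

lemma cn_Bd: "x \<simeq> y \<Longrightarrow> y \<in> Bd \<Longrightarrow> x \<in> Bd"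
  unfolding cn_def using N_Bd Bd_add by fastforce

end


section \<open>Matrix Leibniz identity\<close>

lemma sg_diff: "sg b (x - y) = sg b x - sg b (y::'r::ab_group_add)"
  by (auto simp: sg_def)
lemma sg_add: "sg b (x + y) = sg b x + sg b (y::'r::ab_group_add)"
  by (auto simp: sg_def)
lemma sg_sg: "sg b (sg c x) = sg (b \<noteq> c) (x::'r::ab_group_add)"
  by (auto simp: sg_def)

context stlc
begin

abbreviation J where "J \<equiv> idx m n"
abbreviation sig where "sig a b c \<equiv> tau m a b \<and> tau m b c"

lemma expandL:
  "Bm (Bm U V) W r s = (\<Sum>a\<in>J. \<Sum>b\<in>J.
      U r a * V a b * W b s - sg (sig r a b) (V r a * U a b * W b s)
    - sg (sig r a s) (W r a * U a b * V b s) + sg (sig r a s) (sg (sig a b s) (W r a * V a b * U b s)))"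
proof -
  have "(\<Sum>k\<in>J. Bm U V r k * W k s) = (\<Sum>b\<in>J. \<Sum>a\<in>J.
      U r a * V a b * W b s - sg (sig r a b) (V r a * U a b * W b s))"
    unfolding Bm_def
    by (simp add: left_diff_distrib sum_distrib_right sum_subtractf sg_mult_left[symmetric])
  also have "\<dots> = (\<Sum>a\<in>J. \<Sum>b\<in>J.
      U r a * V a b * W b s - sg (sig r a b) (V r a * U a b * W b s))"
    by (rule sum.swap)
  finally have A: "(\<Sum>k\<in>J. Bm U V r k * W k s) = (\<Sum>a\<in>J. \<Sum>b\<in>J.
      U r a * V a b * W b s - sg (sig r a b) (V r a * U a b * W b s))" .
  have B: "(\<Sum>k\<in>J. sg (sig r k s) (W r k * Bm U V k s)) = (\<Sum>a\<in>J. \<Sum>b\<in>J.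
      sg (sig r a s) (W r a * U a b * V b s) - sg (sig r a s) (sg (sig a b s) (W r a * V a b * U b s)))"
    unfolding Bm_def
    by (simp add: right_diff_distrib sum_distrib_left sum_subtractf sg_mult_right[symmetric]
        sg_sum sg_diff mult.assoc)
  show ?thesis
  proof -
    have "Bm (Bm U V) W r s = (\<Sum>k\<in>J. Bm U V r k * W k s) - (\<Sum>k\<in>J. sg (sig r k s) (W r k * Bm U V k s))"
      by (simp only: Bm_def[of "Bm U V" W])
    then show ?thesis unfolding A B by (simp add: sum_subtractf sum.distrib algebra_simps)
  qed
qed

lemma expandR:
  "Bm U (Bm V W) r s = (\<Sum>a\<in>J. \<Sum>b\<in>J.
      U r a * V a b * W b s - sg (sig a b s) (U r a * W a b * V b s)
    - sg (sig r b s) (V r a * W a b * U b s) + sg (sig r b s) (sg (sig r a b) (W r a * V a b * U b s)))"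
proof -
  have A: "(\<Sum>k\<in>J. U r k * Bm V W k s) = (\<Sum>a\<in>J. \<Sum>b\<in>J.
      U r a * V a b * W b s - sg (sig a b s) (U r a * W a b * V b s))"
    unfolding Bm_def
    by (simp add: right_diff_distrib sum_distrib_left sum_subtractf sg_mult_right[symmetric]
        sg_sum mult.assoc)
  have "(\<Sum>k\<in>J. sg (sig r k s) (Bm V W r k * U k s)) = (\<Sum>b\<in>J. \<Sum>a\<in>J.
      sg (sig r b s) (V r a * W a b * U b s) - sg (sig r b s) (sg (sig r a b) (W r a * V a b * U b s)))"
    unfolding Bm_def
    by (simp add: left_diff_distrib sum_distrib_right sum_subtractf sg_mult_left[symmetric]
        sg_sum sg_diff)
  also have "\<dots> = (\<Sum>a\<in>J. \<Sum>b\<in>J.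
      sg (sig r b s) (V r a * W a b * U b s) - sg (sig r b s) (sg (sig r a b) (W r a * V a b * U b s)))"
    by (rule sum.swap)
  finally have B: "(\<Sum>k\<in>J. sg (sig r k s) (Bm V W r k * U k s)) = (\<Sum>a\<in>J. \<Sum>b\<in>J.
      sg (sig r b s) (V r a * W a b * U b s) - sg (sig r b s) (sg (sig r a b) (W r a * V a b * U b s)))" .
  show ?thesis
  proof -
    have "Bm U (Bm V W) r s = (\<Sum>k\<in>J. U r k * Bm V W k s) - (\<Sum>k\<in>J. sg (sig r k s) (Bm V W r k * U k s))"
      by (simp only: Bm_def[of U "Bm V W"])
    then show ?thesis unfolding A B by (simp add: sum_subtractf sum.distrib algebra_simps)
  qed
qed

lemma nz3: "x * y * z \<noteq> (0::'a) \<Longrightarrow> x \<noteq> 0 \<and> y \<noteq> 0 \<and> z \<noteq> 0"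
  by auto

lemma pair0: "(M \<noteq> 0 \<Longrightarrow> b1 = b2) \<Longrightarrow> sg b1 M - sg b2 M = (0::'a)"
  by (cases "M = 0") auto

lemma Bm_leib:
  assumes hX: "homM p X" and hY: "homM q Y" and hZ: "homM z Z"
  shows "Bm (Bm X Y) Z r s - Bm X (Bm Y Z) r s + sg (p \<and> q) (Bm Y (Bm X Z) r s) = 0"
proof -
  define e where "e = (p \<and> q)"
  have hh: "\<And>U d i j. homM d U \<Longrightarrow> U i j \<noteq> 0 \<Longrightarrow> tau m i j = d"
    by (auto simp: homM_def)
  define G where "G a b =
      (sg e (Y r a * X a b * Z b s) - sg (sig r a b) (Y r a * X a b * Z b s))
    + (sg e (sg (sig r b s) (sg (sig r a b) (Z r a * X a b * Y b s))) - sg (sig r a s) (Z r a * X a b * Y b s))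
    + (sg (sig r a s) (sg (sig a b s) (Z r a * Y a b * X b s)) - sg (sig r b s) (sg (sig r a b) (Z r a * Y a b * X b s)))
    + (sg (sig a b s) (X r a * Z a b * Y b s) - sg e (sg (sig r b s) (X r a * Z a b * Y b s)))
    + (sg (sig r b s) (Y r a * Z a b * X b s) - sg e (sg (sig a b s) (Y r a * Z a b * X b s)))" for a b
  have G0: "G a b = 0" for a b
  proof -
    have 1: "sg e (Y r a * X a b * Z b s) - sg (sig r a b) (Y r a * X a b * Z b s) = 0"
    proof (rule pair0)
      assume "Y r a * X a b * Z b s \<noteq> 0"
      then have "tau m r a = q" "tau m a b = p" "tau m b s = z"
        using hh[OF hY] hh[OF hX] hh[OF hZ] nz3 by blast+
      then show "e = sig r a b" by (auto simp: e_def)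
    qed
    have 2: "sg e (sg (sig r b s) (sg (sig r a b) (Z r a * X a b * Y b s))) - sg (sig r a s) (Z r a * X a b * Y b s) = 0"
      unfolding sg_sg
    proof (rule pair0)
      assume "Z r a * X a b * Y b s \<noteq> 0"
      then have "tau m r a = z" "tau m a b = p" "tau m b s = q"
        using hh[OF hY] hh[OF hX] hh[OF hZ] nz3 by blast+
      then show "(e \<noteq> (sig r b s \<noteq> sig r a b)) = sig r a s" by (auto simp: e_def tau_def)
    qed
    have 3: "sg (sig r a s) (sg (sig a b s) (Z r a * Y a b * X b s)) - sg (sig r b s) (sg (sig r a b) (Z r a * Y a b * X b s)) = 0"
      unfolding sg_sg
    proof (rule pair0)
      assume "Z r a * Y a b * X b s \<noteq> 0"
      then have "tau m r a = z" "tau m a b = q" "tau m b s = p"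
        using hh[OF hY] hh[OF hX] hh[OF hZ] nz3 by blast+
      then show "(sig r a s \<noteq> sig a b s) = (sig r b s \<noteq> sig r a b)" by (auto simp: tau_def)
    qed
    have 4: "sg (sig a b s) (X r a * Z a b * Y b s) - sg e (sg (sig r b s) (X r a * Z a b * Y b s)) = 0"
      unfolding sg_sg
    proof (rule pair0)
      assume "X r a * Z a b * Y b s \<noteq> 0"
      then have "tau m r a = p" "tau m a b = z" "tau m b s = q"
        using hh[OF hY] hh[OF hX] hh[OF hZ] nz3 by blast+
      then show "sig a b s = (e \<noteq> sig r b s)" by (auto simp: e_def tau_def)
    qed
    have 5: "sg (sig r b s) (Y r a * Z a b * X b s) - sg e (sg (sig a b s) (Y r a * Z a b * X b s)) = 0"
      unfolding sg_sg
    proof (rule pair0)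
      assume "Y r a * Z a b * X b s \<noteq> 0"
      then have "tau m r a = q" "tau m a b = z" "tau m b s = p"
        using hh[OF hY] hh[OF hX] hh[OF hZ] nz3 by blast+
      then show "sig r b s = (e \<noteq> sig a b s)" by (auto simp: e_def tau_def)
    qed
    show ?thesis unfolding G_def 1 2 3 4 5 by simp
  qed
  have "Bm (Bm X Y) Z r s - Bm X (Bm Y Z) r s + sg e (Bm Y (Bm X Z) r s) = (\<Sum>a\<in>J. \<Sum>b\<in>J. G a b)"
    unfolding expandL expandR G_def
    by (simp add: sg_sum sg_diff sg_add sum_subtractf sum.distrib algebra_simps)
  then show ?thesis using G0 by (simp add: e_def)
qed

end


context stlc
begin

lemma gen_Bm: "gen (Bm X Y r s, w) \<simeq> (\<Sum>k\<in>J. gen (X r k * Y k s, w) - sg (sig r k s) (gen (Y r k * X k s, w)))"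
proof -
  have "gen (Bm X Y r s, w) \<simeq> gen (\<Sum>k\<in>J. X r k * Y k s, w) - gen (\<Sum>k\<in>J. sg (sig r k s) (Y r k * X k s), w)"
    unfolding Bm_def by (rule gN_diffL)
  also have "\<dots> \<simeq> (\<Sum>k\<in>J. gen (X r k * Y k s, w)) - (\<Sum>k\<in>J. sg (sig r k s) (gen (Y r k * X k s, w)))"
  proof (rule cn_diff)
    show "gen (\<Sum>k\<in>J. X r k * Y k s, w) \<simeq> (\<Sum>k\<in>J. gen (X r k * Y k s, w))" by (rule gN_sumL)
    have "gen (\<Sum>k\<in>J. sg (sig r k s) (Y r k * X k s), w) \<simeq> (\<Sum>k\<in>J. gen (sg (sig r k s) (Y r k * X k s), w))"
      by (rule gN_sumL)
    also have "\<dots> \<simeq> (\<Sum>k\<in>J. sg (sig r k s) (gen (Y r k * X k s, w)))"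
      by (rule cn_sum, rule gN_sgL)
    finally show "gen (\<Sum>k\<in>J. sg (sig r k s) (Y r k * X k s), w) \<simeq> (\<Sum>k\<in>J. sg (sig r k s) (gen (Y r k * X k s, w)))" .
  qed
  finally show ?thesis by (simp add: sum_subtractf)
qed

lemma gen_Bm2: "gen (w, Bm X Y r s) \<simeq> (\<Sum>k\<in>J. gen (w, X r k * Y k s) - sg (sig r k s) (gen (w, Y r k * X k s)))"
proof -
  have "gen (w, Bm X Y r s) \<simeq> gen (w, \<Sum>k\<in>J. X r k * Y k s) - gen (w, \<Sum>k\<in>J. sg (sig r k s) (Y r k * X k s))"
    unfolding Bm_def by (rule gN_diffR)
  also have "\<dots> \<simeq> (\<Sum>k\<in>J. gen (w, X r k * Y k s)) - (\<Sum>k\<in>J. sg (sig r k s) (gen (w, Y r k * X k s)))"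
  proof (rule cn_diff)
    show "gen (w, \<Sum>k\<in>J. X r k * Y k s) \<simeq> (\<Sum>k\<in>J. gen (w, X r k * Y k s))" by (rule gN_sumR)
    have "gen (w, \<Sum>k\<in>J. sg (sig r k s) (Y r k * X k s)) \<simeq> (\<Sum>k\<in>J. gen (w, sg (sig r k s) (Y r k * X k s)))"
      by (rule gN_sumR)
    also have "\<dots> \<simeq> (\<Sum>k\<in>J. sg (sig r k s) (gen (w, Y r k * X k s)))"
      by (rule cn_sum, rule gN_sgR)
    finally show "gen (w, \<Sum>k\<in>J. sg (sig r k s) (Y r k * X k s)) \<simeq> (\<Sum>k\<in>J. sg (sig r k s) (gen (w, Y r k * X k s)))" .
  qed
  finally show ?thesis by (simp add: sum_subtractf)
qed

lemma omL_exp: "om (Bm X Y) Z \<simeq> (\<Sum>r\<in>J. \<Sum>s\<in>J. \<Sum>k\<in>J.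
    smul (dl r) (gen (X r k * Y k s, Z s r)) - smul (dl r) (sg (sig r k s) (gen (Y r k * X k s, Z s r))))"
  unfolding om_def
  by (intro cn_sum) (rule cn_trans[OF cn_smul[OF gen_Bm]], simp add: SM.scale_sum_right SM.scale_right_diff_distrib)

lemma omR_exp: "om X (Bm Y Z) \<simeq> (\<Sum>r\<in>J. \<Sum>s\<in>J. \<Sum>k\<in>J.
    smul (dl r) (gen (X r s, Y s k * Z k r)) - smul (dl r) (sg (sig s k r) (gen (X r s, Z s k * Y k r))))"
  unfolding om_def
  by (intro cn_sum) (rule cn_trans[OF cn_smul[OF gen_Bm2]], simp add: SM.scale_sum_right SM.scale_right_diff_distrib)

lemma swap_in: "(\<Sum>r\<in>J. \<Sum>s\<in>J. \<Sum>k\<in>J. f r s k) = (\<Sum>r\<in>J. \<Sum>s\<in>J. \<Sum>k\<in>J. f r k s)"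
  by (rule sum.cong[OF refl], rule sum.swap)

lemma swap_out: "(\<Sum>r\<in>J. \<Sum>s\<in>J. \<Sum>k\<in>J. f r s k) = (\<Sum>r\<in>J. \<Sum>s\<in>J. \<Sum>k\<in>J. f k s r)"
proof -
  have "(\<Sum>r\<in>J. \<Sum>s\<in>J. \<Sum>k\<in>J. f r s k) = (\<Sum>r\<in>J. \<Sum>k\<in>J. \<Sum>s\<in>J. f r s k)"
    by (rule swap_in)
  also have "\<dots> = (\<Sum>k\<in>J. \<Sum>r\<in>J. \<Sum>s\<in>J. f r s k)"
    by (rule sum.swap)
  also have "\<dots> = (\<Sum>k\<in>J. \<Sum>s\<in>J. \<Sum>r\<in>J. f r s k)"
    by (rule swap_in)
  finally show ?thesis .
qed

definition sgk :: "bool \<Rightarrow> 'k" where "sgk b = (if b then -1 else 1)"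

lemma sg_smul: "sg b (x :: ('a \<times> 'a \<Rightarrow>\<^sub>0 'k)) = smul (sgk b) x"
  by (auto simp: sg_def sgk_def)

lemma sgn_par_sgk: "sgn_par p q = sgk (p \<and> q)"
  by (simp add: sgn_par_def sgk_def)

lemma N_gen0L: "x = 0 \<Longrightarrow> gen (x, w) \<in> N"
  using gN_zeroL by (simp add: cn_def)
lemma N_gen0R: "w = 0 \<Longrightarrow> gen (x, w) \<in> N"
  using gN_zeroR by (simp add: cn_def)

lemma d2_comb:
  assumes "x \<noteq> 0 \<Longrightarrow> y \<noteq> 0 \<Longrightarrow> w \<noteq> 0 \<Longrightarrow> c2 = c1 \<and> c3 = c1"
  shows "smul c1 (gen (x * y, w)) - smul c2 (gen (x, y * w)) - smul c3 (gen (y, w * x)) \<in> Bd"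
proof (cases "x \<noteq> 0 \<and> y \<noteq> 0 \<and> w \<noteq> 0")
  case True
  with assms have "c2 = c1" "c3 = c1" by auto
  then have "smul c1 (gen (x * y, w)) - smul c2 (gen (x, y * w)) - smul c3 (gen (y, w * x))
     = smul c1 (gen (x * y, w) - gen (x, y * w) - gen (y, w * x))"
    by (simp add: SM.scale_right_diff_distrib)
  then show ?thesis using Bd_smul[OF d2t_Bd] by simp
next
  case False
  then have "gen (x * y, w) \<in> N" "gen (x, y * w) \<in> N" "gen (y, w * x) \<in> N"
    by (auto intro: N_gen0L N_gen0R)
  then show ?thesis by (intro N_Bd N_diff N_smul)
qed

lemma comb3:
  fixes f g :: "nat \<Rightarrow> nat \<Rightarrow> nat \<Rightarrow> 'v::ab_group_add"
  shows "(\<Sum>r\<in>J. \<Sum>s\<in>J. \<Sum>k\<in>J. f r s k) - (\<Sum>r\<in>J. \<Sum>s\<in>J. \<Sum>k\<in>J. g r s k)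
   = (\<Sum>r\<in>J. \<Sum>s\<in>J. \<Sum>k\<in>J. f r s k - g r s k)"
  by (simp add: sum_subtractf)

lemma comb3s:
  "(\<Sum>r\<in>J. \<Sum>s\<in>J. \<Sum>k\<in>J. f r s k) + smul c (\<Sum>r\<in>J. \<Sum>s\<in>J. \<Sum>k\<in>J. g r s k)
   = (\<Sum>r\<in>J. \<Sum>s\<in>J. \<Sum>k\<in>J. f r s k + smul c (g r s k))"
  by (simp add: sum.distrib SM.scale_sum_right)

lemma dl_mult: "dl r * dl k = sgk (tau m r k)"
  by (auto simp: dl_def sgk_def tau_def)

lemma om_leib:
  assumes hX: "homM p X" and hY: "homM q Y" and hZ: "homM z Z"
  shows "om (Bm X Y) Z - om X (Bm Y Z) + smul (sgn_par p q) (om Y (Bm X Z)) \<in> Bd"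
proof -
  define e :: 'k where "e = sgn_par p q"
  have hh: "\<And>U d i j. homM d U \<Longrightarrow> U i j \<noteq> 0 \<Longrightarrow> tau m i j = d"
    by (auto simp: homM_def)
  define T1 where "T1 r s k = smul (dl r) (gen (X r k * Y k s, Z s r)) - smul (dl r) (sg (sig r k s) (gen (Y r k * X k s, Z s r)))" for r s k
  define T2 where "T2 r s k = smul (dl r) (gen (X r k, Y k s * Z s r)) - smul (dl k) (sg (sig s r k) (gen (X k s, Z s r * Y r k)))" for r s k
  define T3 where "T3 r s k = smul (dl r) (gen (Y r k, X k s * Z s r)) - smul (dl k) (sg (sig s r k) (gen (Y k s, Z s r * X r k)))" for r s k
  have E1: "om (Bm X Y) Z \<simeq> (\<Sum>r\<in>J. \<Sum>s\<in>J. \<Sum>k\<in>J. T1 r s k)"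
    unfolding T1_def by (rule omL_exp)
  have E2: "om X (Bm Y Z) \<simeq> (\<Sum>r\<in>J. \<Sum>s\<in>J. \<Sum>k\<in>J. T2 r s k)"
  proof -
    have "om X (Bm Y Z) \<simeq> (\<Sum>r\<in>J. \<Sum>s\<in>J. \<Sum>k\<in>J.
      smul (dl r) (gen (X r s, Y s k * Z k r)) - smul (dl r) (sg (sig s k r) (gen (X r s, Z s k * Y k r))))"
      by (rule omR_exp)
    also have "\<dots> = (\<Sum>r\<in>J. \<Sum>s\<in>J. \<Sum>k\<in>J. smul (dl r) (gen (X r s, Y s k * Z k r)))
        - (\<Sum>r\<in>J. \<Sum>s\<in>J. \<Sum>k\<in>J. smul (dl r) (sg (sig s k r) (gen (X r s, Z s k * Y k r))))"
      by (rule comb3[symmetric])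
    also have "\<dots> = (\<Sum>r\<in>J. \<Sum>s\<in>J. \<Sum>k\<in>J. smul (dl r) (gen (X r k, Y k s * Z s r)))
        - (\<Sum>r\<in>J. \<Sum>s\<in>J. \<Sum>k\<in>J. smul (dl k) (sg (sig s r k) (gen (X k s, Z s r * Y r k))))"
      by (subst swap_in, subst (2) swap_out, rule refl)
    also have "\<dots> = (\<Sum>r\<in>J. \<Sum>s\<in>J. \<Sum>k\<in>J. T2 r s k)"
      unfolding T2_def by (rule comb3)
    finally show ?thesis .
  qed
  have E3: "om Y (Bm X Z) \<simeq> (\<Sum>r\<in>J. \<Sum>s\<in>J. \<Sum>k\<in>J. T3 r s k)"
  proof -
    have "om Y (Bm X Z) \<simeq> (\<Sum>r\<in>J. \<Sum>s\<in>J. \<Sum>k\<in>J.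
      smul (dl r) (gen (Y r s, X s k * Z k r)) - smul (dl r) (sg (sig s k r) (gen (Y r s, Z s k * X k r))))"
      by (rule omR_exp)
    also have "\<dots> = (\<Sum>r\<in>J. \<Sum>s\<in>J. \<Sum>k\<in>J. smul (dl r) (gen (Y r s, X s k * Z k r)))
        - (\<Sum>r\<in>J. \<Sum>s\<in>J. \<Sum>k\<in>J. smul (dl r) (sg (sig s k r) (gen (Y r s, Z s k * X k r))))"
      by (rule comb3[symmetric])
    also have "\<dots> = (\<Sum>r\<in>J. \<Sum>s\<in>J. \<Sum>k\<in>J. smul (dl r) (gen (Y r k, X k s * Z s r)))
        - (\<Sum>r\<in>J. \<Sum>s\<in>J. \<Sum>k\<in>J. smul (dl k) (sg (sig s r k) (gen (Y k s, Z s r * X r k))))"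
      by (subst swap_in, subst (2) swap_out, rule refl)
    also have "\<dots> = (\<Sum>r\<in>J. \<Sum>s\<in>J. \<Sum>k\<in>J. T3 r s k)"
      unfolding T3_def by (rule comb3)
    finally show ?thesis .
  qed
  have pt: "T1 r s k - T2 r s k + smul e (T3 r s k) \<in> Bd" for r s k
  proof -
    have eq: "T1 r s k - T2 r s k + smul e (T3 r s k)
      = (smul (dl r) (gen (X r k * Y k s, Z s r)) - smul (dl r) (gen (X r k, Y k s * Z s r))
           - smul (e * dl k * sgk (sig s r k)) (gen (Y k s, Z s r * X r k)))
      + (smul (- dl r * sgk (sig r k s)) (gen (Y r k * X k s, Z s r))
           - smul (- e * dl r) (gen (Y r k, X k s * Z s r))
           - smul (- dl k * sgk (sig s r k)) (gen (X k s, Z s r * Y r k)))"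
      unfolding T1_def T2_def T3_def sg_smul
      by (simp add: SM.scale_right_diff_distrib algebra_simps)
    have A: "smul (dl r) (gen (X r k * Y k s, Z s r)) - smul (dl r) (gen (X r k, Y k s * Z s r))
           - smul (e * dl k * sgk (sig s r k)) (gen (Y k s, Z s r * X r k)) \<in> Bd"
    proof (rule d2_comb)
      assume "X r k \<noteq> 0" "Y k s \<noteq> 0" "Z s r \<noteq> 0"
      then have "tau m r k = p" "tau m k s = q" "tau m s r = z"
        using hh[OF hX] hh[OF hY] hh[OF hZ] by blast+
      then show "dl r = dl r \<and> e * dl k * sgk (sig s r k) = dl r"
        by (auto simp: e_def sgn_par_sgk dl_def sgk_def tau_def)
    qed
    have B: "smul (- dl r * sgk (sig r k s)) (gen (Y r k * X k s, Z s r))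
           - smul (- e * dl r) (gen (Y r k, X k s * Z s r))
           - smul (- dl k * sgk (sig s r k)) (gen (X k s, Z s r * Y r k)) \<in> Bd"
    proof (rule d2_comb)
      assume "Y r k \<noteq> 0" "X k s \<noteq> 0" "Z s r \<noteq> 0"
      then have "tau m r k = q" "tau m k s = p" "tau m s r = z"
        using hh[OF hX] hh[OF hY] hh[OF hZ] by blast+
      then show "- e * dl r = - dl r * sgk (sig r k s) \<and> - dl k * sgk (sig s r k) = - dl r * sgk (sig r k s)"
        by (auto simp: e_def sgn_par_sgk dl_def sgk_def tau_def)
    qed
    show ?thesis unfolding eq by (rule Bd_add[OF A B])
  qed
  have "om (Bm X Y) Z - om X (Bm Y Z) + smul e (om Y (Bm X Z))
     \<simeq> (\<Sum>r\<in>J. \<Sum>s\<in>J. \<Sum>k\<in>J. T1 r s k) - (\<Sum>r\<in>J. \<Sum>s\<in>J. \<Sum>k\<in>J. T2 r s k)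
       + smul e (\<Sum>r\<in>J. \<Sum>s\<in>J. \<Sum>k\<in>J. T3 r s k)"
    by (intro cn_add cn_diff cn_smul E1 E2 E3)
  also have "\<dots> = (\<Sum>r\<in>J. \<Sum>s\<in>J. \<Sum>k\<in>J. T1 r s k - T2 r s k + smul e (T3 r s k))"
    unfolding comb3 comb3s by simp
  finally have "om (Bm X Y) Z - om X (Bm Y Z) + smul e (om Y (Bm X Z))
     \<simeq> (\<Sum>r\<in>J. \<Sum>s\<in>J. \<Sum>k\<in>J. T1 r s k - T2 r s k + smul e (T3 r s k))" .
  moreover have "(\<Sum>r\<in>J. \<Sum>s\<in>J. \<Sum>k\<in>J. T1 r s k - T2 r s k + smul e (T3 r s k)) \<in> Bd"
    by (intro Bd_sum pt)
  ultimately show ?thesis unfolding e_def by (rule cn_Bd)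
qed

end


context stlc
begin

lemma finite_J [simp]: "finite (idx m n)"
  by (simp add: idx_def)

lemma sum_if_eq: "finite A \<Longrightarrow> (\<Sum>q\<in>A. if q = j then f q else 0) = (if j \<in> A then f j else 0)"
  by (simp add: sum.delta)

lemma Bm_E: "Bm (Emat i j a) (Emat k l b) r s =
   (if r = i \<and> s = l \<and> j = k \<and> j \<in> J then a * b else 0)
 - (if r = k \<and> s = j \<and> l = i \<and> i \<in> J then sg (sig k i j) (b * a) else 0)"
proof -
  have 1: "(\<Sum>q\<in>J. Emat i j a r q * Emat k l b q s) = (\<Sum>q\<in>J. if q = j then (if r = i \<and> j = k \<and> s = l then a * b else 0) else 0)"
    by (rule sum.cong) (auto simp: Emat_def)
  have 2: "(\<Sum>q\<in>J. sg (sig r q s) (Emat k l b r q * Emat i j a q s)) = (\<Sum>q\<in>J. if q = l then (if r = k \<and> l = i \<and> s = j then sg (sig k i j) (b * a) else 0) else 0)"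
    by (rule sum.cong) (auto simp: Emat_def)
  show ?thesis unfolding Bm_def 1 2 by (auto simp: sum_if_eq)
qed

lemma Bm_zeroR: "Bm X (\<lambda>r s. 0) r s = 0" by (simp add: Bm_def)
lemma Bm_zeroL: "Bm (\<lambda>r s. 0) Y r s = 0" by (simp add: Bm_def)

lemma om_zeroR: "om X (\<lambda>r s. 0) \<in> N"
  unfolding om_def by (intro N_sum N_smul N_gen0R) simp
lemma om_zeroL: "om (\<lambda>r s. 0) Y \<in> N"
  unfolding om_def by (intro N_sum N_smul N_gen0L) simp

lemma om_E: "om (Emat i j a) (Emat k l b) \<simeq>
   (if j = k \<and> i = l \<and> i \<in> J \<and> j \<in> J then smul (dl i) (gen (a, b)) else 0)"
proof -
  have "om (Emat i j a) (Emat k l b) \<simeq> (\<Sum>r\<in>J. \<Sum>s\<in>J. if r = i then (if s = j then (if j = k \<and> i = l then smul (dl i) (gen (a, b)) else 0) else 0) else 0)"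
    unfolding om_def
  proof (intro cn_sum)
    fix r s
    show "smul (dl r) (gen (Emat i j a r s, Emat k l b s r)) \<simeq>
      (if r = i then (if s = j then (if j = k \<and> i = l then smul (dl i) (gen (a, b)) else 0) else 0) else 0)"
    proof (cases "r = i \<and> s = j \<and> j = k \<and> i = l")
      case True then show ?thesis by (simp add: Emat_def)
    next
      case False
      then have "gen (Emat i j a r s, Emat k l b s r) \<in> N"
        by (auto simp: Emat_def intro: N_gen0L N_gen0R)
      then have "smul (dl r) (gen (Emat i j a r s, Emat k l b s r)) \<simeq> 0"
        by (simp add: cn_N N_smul)
      with False show ?thesis by auto
    qed
  qed
  also have "\<dots> = (\<Sum>r\<in>J. if r = i then (if j \<in> J then (if j = k \<and> i = l then smul (dl i) (gen (a, b)) else 0) else 0) else 0)"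
    by (rule sum.cong) (auto simp: sum_if_eq)
  also have "\<dots> = (if j = k \<and> i = l \<and> i \<in> J \<and> j \<in> J then smul (dl i) (gen (a, b)) else 0)"
    by (auto simp: sum_if_eq)
  finally show ?thesis .
qed

lemma om_E0: "\<not> (j = k \<and> i = l) \<Longrightarrow> om (Emat i j a) (Emat k l b) \<in> N"
  using om_E[of i j a k l b] by (cases "j = k") (auto simp: cn_def)

lemma ev_v_fun: "ev (v i j a) = Emat i j a"
  by (auto simp: fun_eq_iff)

lemma ev_br_fun: "ev (br f g) = Bm (ev f) (ev g)"
  by (rule ext, rule ext, rule ev_br)

lemma Om_brv: "Om (br (v i j a) (v k l b)) \<simeq> om (Emat i j a) (Emat k l b)"
proof -
  have "ev (v i j a) = Emat i j a" "ev (v k l b) = Emat k l b"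
    by (auto simp: fun_eq_iff)
  then show ?thesis using Om_br[of "v i j a" "v k l b"] by simp
qed

lemma sc_sgn_par: "sc (sgn_par p q) x = sg (p \<and> q) x"
  by (auto simp: sgn_par_def)

theorem I_good: "x \<in> I \<Longrightarrow> (\<forall>r s. ev x r s = 0) \<and> Om x \<in> Bd"
  unfolding stl_ideal_def
proof (induct rule: alg_ideal.induct)
  case (rel x)
  then show ?case unfolding stl_rels_def
  proof (elim UnE CollectE exE conjE)
    fix a b c p q r'
    assume x: "x = br (br a b) c - br a (br b c) + smul (sgn_par p q) (br b (br a c))"
      and h: "a \<in> FL" "b \<in> FL" "c \<in> FL" "homog m p a" "homog m q b" "homog m r' c"
    have hA: "homM p (ev a)" "homM q (ev b)" "homM r' (ev c)" using h by (auto intro: ev_hom)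
    have "ev x r s = 0" for r s
      using Bm_leib[OF hA, of r s]
      by (simp add: x ev_add ev_diff ev_smul ev_br_fun sc_sgn_par)
    moreover have "Om x \<in> Bd"
    proof -
      have "Om x \<simeq> om (Bm (ev a) (ev b)) (ev c) - om (ev a) (Bm (ev b) (ev c))
            + smul (sgn_par p q) (om (ev b) (Bm (ev a) (ev c)))"
        unfolding x Om_add Om_diff Om_smul
        by (intro cn_add cn_diff cn_smul) (simp_all add: Om_br[THEN cn_trans] ev_br_fun)
      then show ?thesis by (rule cn_Bd) (rule om_leib[OF hA])
    qed
    ultimately show ?thesis by blast
  next
    fix i j c a b
    assume x: "x = v i j (sc c a + b) - smul c (v i j a) - v i j b"
    show ?thesis
      by (simp add: x ev_diff ev_smul Om_diff Om_smul Emat_def SC.scale_right_distrib)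
  next
    fix i j k l a b
    assume x: "x = br (v i j a) (v k l b)" and h: "{i, j, k, l} \<subseteq> idx m n" "i \<noteq> j" "k \<noteq> l" "i \<noteq> l" "j \<noteq> k"
    have "ev x r s = 0" for r s
      unfolding x ev_br_fun ev_v_fun Bm_E using h by simp
    moreover have "Om x \<in> Bd"
      unfolding x using Om_brv[of i j a k l b] om_E0[of j k i l a b] h
      by (metis cn_Bd cn_def N_Bd diff_zero)
    ultimately show ?thesis by blast
  next
    fix i j l a b
    assume x: "x = br (v i j a) (v j l b) - v i l (a * b)" and h: "{i, j, l} \<subseteq> idx m n" "i \<noteq> j" "j \<noteq> l" "i \<noteq> l"
    have "ev x r s = 0" for r s
      unfolding x ev_diff ev_br_fun ev_v_fun Bm_E using h by (auto simp: Emat_def)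
    moreover have "Om x \<in> Bd"
      unfolding x Om_diff using Om_brv[of i j a j l b] om_E0[of j j i l a b] h
      by (metis cn_Bd cn_def N_Bd diff_zero Om_v)
    ultimately show ?thesis by blast
  next
    fix i j k a b
    assume x: "x = br (v i j a) (v k i b) + smul (sgn_par (tau m i j) (tau m k i)) (v k j (b * a))"
      and h: "{i, j, k} \<subseteq> idx m n" "i \<noteq> j" "k \<noteq> i" "j \<noteq> k"
    have "ev x r s = 0" for r s
      unfolding x ev_add ev_smul ev_br_fun ev_v_fun Bm_E using h by (auto simp: Emat_def sc_sgn_par sg_def tau_sym)
    moreover have "Om x \<in> Bd"
      unfolding x Om_add Om_smul using Om_brv[of i j a k i b] om_E0[of j k i i a b] h
      by (metis cn_Bd cn_def N_Bd diff_zero Om_v SM.scale_zero_right add_0_right)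
    ultimately show ?thesis by blast
  qed
next
  case zero then show ?case by simp
next
  case (add x y) then show ?case by (simp add: ev_add Om_add Bd_add)
next
  case (scal x c) then show ?case by (simp add: ev_smul Om_smul Bd_smul)
next
  case (left x f)
  then have ev0: "ev x = (\<lambda>r s. 0)" by (auto simp: fun_eq_iff)
  have "ev (br f x) r s = 0" for r s by (simp add: ev_br_fun ev0 Bm_zeroR)
  moreover have "Om (br f x) \<in> Bd"
    using Om_br[of f x] om_zeroR[of "ev f"] unfolding ev0 by (metis cn_Bd cn_def N_Bd diff_zero)
  ultimately show ?case by blast
next
  case (right x f)
  then have ev0: "ev x = (\<lambda>r s. 0)" by (auto simp: fun_eq_iff)
  have "ev (br x f) r s = 0" for r s by (simp add: ev_br_fun ev0 Bm_zeroL)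
  moreover have "Om (br x f) \<in> Bd"
    using Om_br[of x f] om_zeroL[of "ev f"] unfolding ev0 by (metis cn_Bd cn_def N_Bd diff_zero)
  ultimately show ?case by blast
qed

end


lemma linx_smul_gen: "linx smul gen u = (u :: 'b \<Rightarrow>\<^sub>0 'k::field)"
proof (rule poly_mapping_eqI)
  fix x
  have "Poly_Mapping.lookup (linx smul gen u) x = (\<Sum>p\<in>Poly_Mapping.keys u. if p = x then Poly_Mapping.lookup u p else 0)"
    unfolding linx_def lookup_sum by (rule sum.cong) (auto simp: gen_def lookup_single when_def)
  also have "\<dots> = Poly_Mapping.lookup u x"
    by (simp add: sum.delta' in_keys_iff)
  finally show "Poly_Mapping.lookup (linx smul gen u) x = Poly_Mapping.lookup u x" .
qed

lemma tau_conj_sym [simp]: "(tau m a b \<and> tau m b a) = tau m a b"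
  by (auto simp: tau_def)

context stlc
begin

abbreviation d1' where "d1' \<equiv> d1 sc"

lemma d1_linx: "d1' f = linx sc (\<lambda>p. fst p * snd p - snd p * fst p) f"
  by (simp add: d1_def linx_def)
lemma d1_add: "d1' (f + g) = d1' f + d1' g" by (simp add: d1_linx SC.linx_add)
lemma d1_smul: "d1' (smul c f) = sc c (d1' f)" by (simp add: d1_linx SC.linx_smul)
lemma d1_diff: "d1' (f - g) = d1' f - d1' g" by (simp add: d1_linx SC.linx_diff)
lemma d1_sum: "d1' (sum F A) = (\<Sum>x\<in>A. d1' (F x))" by (simp add: d1_linx SC.linx_sum)
lemma d1_gen: "d1' (gen (a, b)) = a * b - b * a" by (simp add: d1_linx linx_gen SC.fmod_axioms)
lemma d1_zero [simp]: "d1' 0 = 0" by (simp add: d1_linx)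

definition str :: "'a mat \<Rightarrow> 'a" where "str X = (\<Sum>r\<in>J. sc (dl r) (X r r))"

lemma sc_sg: "sc c (sg b x) = sc (c * sgk b) x"
  by (auto simp: sg_def sgk_def)

lemma dl_tau': "dl r * sgk (tau m r k) = dl k"
  using dl_tau[of r k] by (simp add: sgk_def)

lemma d1_om: "d1' (om X Y) = str (Bm X Y)"
proof -
  have "d1' (om X Y) = (\<Sum>r\<in>J. \<Sum>s\<in>J. sc (dl r) (X r s * Y s r)) - (\<Sum>r\<in>J. \<Sum>s\<in>J. sc (dl r) (Y s r * X r s))"
    unfolding om_def by (simp add: d1_sum d1_smul d1_gen SC.scale_right_diff_distrib sum_subtractf)
  also have "(\<Sum>r\<in>J. \<Sum>s\<in>J. sc (dl r) (Y s r * X r s)) = (\<Sum>s\<in>J. \<Sum>r\<in>J. sc (dl r) (Y s r * X r s))"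
    by (rule sum.swap)
  also have "\<dots> = (\<Sum>r\<in>J. \<Sum>k\<in>J. sc (dl r) (sg (tau m r k) (Y r k * X k r)))"
    by (intro sum.cong refl) (simp add: sc_sg dl_tau')
  finally have 1: "d1' (om X Y) = (\<Sum>r\<in>J. \<Sum>s\<in>J. sc (dl r) (X r s * Y s r)) - (\<Sum>r\<in>J. \<Sum>k\<in>J. sc (dl r) (sg (tau m r k) (Y r k * X k r)))" .
  have "str (Bm X Y) = (\<Sum>r\<in>J. \<Sum>s\<in>J. sc (dl r) (X r s * Y s r)) - (\<Sum>r\<in>J. \<Sum>k\<in>J. sc (dl r) (sg (tau m r k) (Y r k * X k r)))"
    unfolding str_def Bm_def
    by (simp add: SC.scale_right_diff_distrib SC.scale_sum_right sum_subtractf tau_sym[of m _ r])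
  with 1 show ?thesis by simp
qed

lemma str_ev: "str (ev f) = linx sc (\<lambda>t. str (mev m n t)) f"
proof -
  have "str (ev f) = (\<Sum>r\<in>J. sc (dl r) (\<Sum>t\<in>Poly_Mapping.keys f. sc (Poly_Mapping.lookup f t) (mev m n t r r)))"
    by (simp add: str_def evalF_def)
  also have "\<dots> = linx sc (\<lambda>t. str (mev m n t)) f"
    unfolding linx_def str_def
    by (simp add: SC.scale_sum_right sum.swap[of _ J] mult.commute)
  finally show ?thesis .
qed

lemma linx_cong_keys: "(\<And>p. p \<in> Poly_Mapping.keys f \<Longrightarrow> \<phi> p = \<psi> p) \<Longrightarrow> linx s \<phi> f = linx s \<psi> f"
  by (simp add: linx_def)

lemma d1_Om: "f \<in> FL \<Longrightarrow> d1' (Om f) = str (ev f)"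
proof -
  assume f: "f \<in> FL"
  have "d1' (Om f) = linx sc (\<lambda>t. d1' (Omt t)) f"
    unfolding Om_def by (rule linx_hom) (simp_all add: d1_add d1_smul)
  also have "\<dots> = linx sc (\<lambda>t. str (mev m n t)) f"
  proof (rule linx_cong_keys)
    fix t assume "t \<in> Poly_Mapping.keys f"
    with f have vt: "valid m n t" by (simp add: FreeL_def)
    show "d1' (Omt t) = str (mev m n t)"
    proof (cases t)
      case (Gen i j a)
      with vt have "i \<noteq> j" by simp
      then show ?thesis by (auto simp: Gen Omt_def str_def Emat_def intro!: sum.neutral)
    next
      case (Br s t')
      then show ?thesis by (simp add: Omt_def d1_om sbr_Bm mev_hom)
    qed
  qed
  finally show ?thesis by (simp add: str_ev)
qed

lemma ker_cycle: "f \<in> ker_psi sc m n \<Longrightarrow> Om f \<in> HH1_cycles sc"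
proof -
  assume "f \<in> ker_psi sc m n"
  then have f: "f \<in> FL" "ev f = (\<lambda>r s. 0)" by (auto simp: ker_psi_def)
  then show ?thesis by (simp add: HH1_cycles_def d1_Om str_def)
qed

definition h :: "nat \<Rightarrow> nat \<Rightarrow> 'a \<Rightarrow> 'a \<Rightarrow> ('a tr \<Rightarrow>\<^sub>0 'k)" where
  "h i j a b = br (v i j a) (v j i b)"

definition hh :: "nat \<Rightarrow> nat \<Rightarrow> 'a \<Rightarrow> 'a \<Rightarrow> ('a tr \<Rightarrow>\<^sub>0 'k)" where
  "hh i j a b = smul (dl i) (h i j a b)"

definition Lpp :: "('a \<times> 'a \<Rightarrow>\<^sub>0 'k) \<Rightarrow> ('a tr \<Rightarrow>\<^sub>0 'k)" where
  "Lpp u = linx smul (\<lambda>p. hh 1 2 (fst p) (snd p) - hh 1 2 1 (fst p * snd p)) u"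

lemma vld_sym: "vld i j \<Longrightarrow> vld j i" by (auto simp: vld_def)

lemma FL_h: "vld i j \<Longrightarrow> h i j a b \<in> FL"
  by (simp add: h_def FL_br FLv vld_sym)
lemma FL_hh: "vld i j \<Longrightarrow> hh i j a b \<in> FL"
  by (simp add: hh_def FL_h FL_smul)

lemma idx1: "1 \<in> J" using mn3 by (simp add: idx_def)
lemma idx2: "2 \<in> J" using mn3 by (simp add: idx_def)
lemma idx3: "3 \<in> J" using mn3 by (simp add: idx_def)
lemma vld12 [simp]: "vld 1 2" using idx1 idx2 by (simp add: vld_def)
lemma vld12' [simp]: "vld (Suc 0) 2" using vld12 by simp

lemma FL_linx: "(\<And>p. \<phi> p \<in> FL) \<Longrightarrow> linx smul \<phi> u \<in> FL"
  unfolding linx_def by (intro FL_sum FL_smul) auto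

lemma FL_Lpp: "Lpp u \<in> FL"
  unfolding Lpp_def by (intro FL_linx FL_diff FL_hh vld12)

lemma dl_sq: "dl i * dl i = 1" by (simp add: dl_def)

lemma ev_h: "vld i j \<Longrightarrow> ev (h i j a b) r s =
   (if r = i \<and> s = i then a * b else 0) - (if r = j \<and> s = j then sg (tau m j i) (b * a) else 0)"
  by (auto simp: h_def ev_br_fun ev_v_fun Bm_E vld_def)

lemma ev_hh: "vld i j \<Longrightarrow> ev (hh i j a b) r s =
   sc (dl i) ((if r = i \<and> s = i then a * b else 0) - (if r = j \<and> s = j then sg (tau m j i) (b * a) else 0))"
  by (simp add: hh_def ev_smul ev_h)

lemma Om_h: "vld i j \<Longrightarrow> Om (h i j a b) \<simeq> smul (dl i) (gen (a, b))"
  unfolding h_def using Om_brv[of i j a j i b] om_E[of i j a j i b]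
  by (auto simp: vld_def intro: cn_trans)

lemma Om_hh: "vld i j \<Longrightarrow> Om (hh i j a b) \<simeq> gen (a, b)"
proof -
  assume "vld i j"
  then have "Om (hh i j a b) \<simeq> smul (dl i) (smul (dl i) (gen (a, b)))"
    unfolding hh_def Om_smul by (intro cn_smul Om_h)
  then show ?thesis by (simp add: dl_sq)
qed

lemma Lpp_add: "Lpp (u + u') = Lpp u + Lpp u'" by (simp add: Lpp_def SM.linx_add)
lemma Lpp_smul: "Lpp (smul c u) = smul c (Lpp u)" by (simp add: Lpp_def SM.linx_smul)
lemma Lpp_diff: "Lpp (u - u') = Lpp u - Lpp u'" by (simp add: Lpp_def SM.linx_diff)
lemma Lpp_zero [simp]: "Lpp 0 = 0" by (simp add: Lpp_def)
lemma Lpp_gen: "Lpp (gen (a, b)) = hh 1 2 a b - hh 1 2 1 (a * b)"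
  by (simp add: Lpp_def linx_gen fmod_smul)

lemma gen1_Bd: "gen (1, x) \<in> Bd"
  using Bd_neg[OF d2t_Bd[of 1 1 x]] by simp

lemma Om_Lpp: "Om (Lpp u) - u \<in> Bd"
proof -
  have "Om (Lpp u) = linx smul (\<lambda>p. Om (hh 1 2 (fst p) (snd p) - hh 1 2 1 (fst p * snd p))) u"
    unfolding Lpp_def by (rule linx_hom) (simp_all add: Om_add Om_smul)
  also have "\<dots> \<simeq> linx smul (\<lambda>p. gen p - gen (1, fst p * snd p)) u"
    by (rule linx_cn) (auto simp: Om_diff intro!: cn_diff Om_hh vld12)
  also have "\<dots> = u - linx smul (\<lambda>p. gen (1, fst p * snd p)) u"
    by (simp add: SM.linx_fun_diff linx_smul_gen)
  finally have "Om (Lpp u) \<simeq> u - linx smul (\<lambda>p. gen (1, fst p * snd p)) u" .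
  moreover have "linx smul (\<lambda>p. gen (1, fst p * snd p)) u \<in> Bd"
    unfolding linx_def by (intro Bd_sum Bd_smul gen1_Bd)
  ultimately show ?thesis unfolding cn_def
  proof -
    let ?L = "linx smul (\<lambda>p. gen (1, fst p * snd p)) u"
    assume a: "Om (Lpp u) - (u - ?L) \<in> N" "?L \<in> Bd"
    have "Om (Lpp u) - u = (Om (Lpp u) - (u - ?L)) + (- ?L)" by simp
    also have "\<dots> \<in> Bd" by (rule Bd_add[OF N_Bd[OF a(1)] Bd_neg[OF a(2)]])
    finally show ?thesis .
  qed
qed

lemma ev_Lpp: "\<not> (r = 2 \<and> s = 2) \<Longrightarrow> ev (Lpp u) r s = 0"
proof -
  assume rs: "\<not> (r = 2 \<and> s = 2)"
  have "ev (Lpp u) r s = linx sc (\<lambda>p. ev (hh 1 2 (fst p) (snd p) - hh 1 2 1 (fst p * snd p)) r s) u"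
    unfolding Lpp_def by (rule linx_hom) (simp_all add: ev_add ev_smul)
  also have "\<dots> = linx sc (\<lambda>p. 0) u"
    using rs vld12 by (intro arg_cong[where f = "\<lambda>F. linx sc F u"] ext) (auto simp: ev_diff ev_hh)
  finally show ?thesis by (simp add: linx_def)
qed

lemma ev_Lpp_cycle: "d1' u = 0 \<Longrightarrow> ev (Lpp u) r s = 0"
proof -
  assume d: "d1' u = 0"
  have "ev (Lpp u) r s = linx sc (\<lambda>p. ev (hh 1 2 (fst p) (snd p) - hh 1 2 1 (fst p * snd p)) r s) u"
    unfolding Lpp_def by (rule linx_hom) (simp_all add: ev_add ev_smul)
  also have "\<dots> = linx sc (\<lambda>p. (if r = 2 \<and> s = 2 then sc (dl 1) (sg (tau m 2 1) (fst p * snd p - snd p * fst p)) else 0)) u"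
    using vld12 by (intro arg_cong[where f = "\<lambda>F. linx sc F u"] ext)
      (auto simp: ev_diff ev_hh sg_def SC.scale_right_diff_distrib)
  also have "\<dots> = (if r = 2 \<and> s = 2 then sc (dl 1) (sg (tau m 2 1) (d1' u)) else 0)"
    by (auto simp: d1_linx linx_def SC.scale_sum_right sg_sum sc_sg mult.commute)
  finally show ?thesis using d by simp
qed

end


context stlc
begin

lemma h_addL: "vld i j \<Longrightarrow> h i j (a + a') b \<approx> h i j a b + h i j a' b"
  unfolding h_def br_add_left[symmetric] by (intro cg_brL v_add FLv[OF vld_sym])
lemma h_addR: "vld i j \<Longrightarrow> h i j a (b + b') \<approx> h i j a b + h i j a b'"
  unfolding h_def br_add_right[symmetric] by (intro cg_brR v_add[OF vld_sym] FLv)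
lemma h_scL: "vld i j \<Longrightarrow> h i j (sc c a) b \<approx> smul c (h i j a b)"
  unfolding h_def br_smul_left[symmetric] by (intro cg_brL v_sc FLv[OF vld_sym])
lemma h_scR: "vld i j \<Longrightarrow> h i j a (sc c b) \<approx> smul c (h i j a b)"
  unfolding h_def br_smul_right[symmetric] by (intro cg_brR v_sc[OF vld_sym] FLv)
lemma h_zeroR: "vld i j \<Longrightarrow> h i j a 0 \<approx> 0"
  using h_scR[of i j a 0 0] by simp
lemma h_zeroL: "vld i j \<Longrightarrow> h i j 0 b \<approx> 0"
  using h_scL[of i j 0 0 b] by simp

lemma hh_addL: "vld i j \<Longrightarrow> hh i j (a + a') b \<approx> hh i j a b + hh i j a' b"
  unfolding hh_def SM.scale_right_distrib[symmetric] by (intro cg_smul h_addL)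
lemma hh_addR: "vld i j \<Longrightarrow> hh i j a (b + b') \<approx> hh i j a b + hh i j a b'"
  unfolding hh_def SM.scale_right_distrib[symmetric] by (intro cg_smul h_addR)
lemma hh_scL: "vld i j \<Longrightarrow> hh i j (sc c a) b \<approx> smul c (hh i j a b)"
proof -
  assume "vld i j"
  then have "h i j (sc c a) b \<approx> smul c (h i j a b)" by (rule h_scL)
  then have "smul (dl i) (h i j (sc c a) b) \<approx> smul (dl i) (smul c (h i j a b))" by (rule cg_smul)
  then show ?thesis unfolding hh_def by (simp add: mult.commute)
qed
lemma hh_scR: "vld i j \<Longrightarrow> hh i j a (sc c b) \<approx> smul c (hh i j a b)"
proof -
  assume "vld i j"
  then have "h i j a (sc c b) \<approx> smul c (h i j a b)" by (rule h_scR)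
  then have "smul (dl i) (h i j a (sc c b)) \<approx> smul (dl i) (smul c (h i j a b))" by (rule cg_smul)
  then show ?thesis unfolding hh_def by (simp add: mult.commute)
qed
lemma hh_zeroR: "vld i j \<Longrightarrow> hh i j a 0 \<approx> 0"
  using hh_scR[of i j a 0 0] by simp
lemma hh_zeroL: "vld i j \<Longrightarrow> hh i j 0 b \<approx> 0"
  using hh_scL[of i j 0 0 b] by simp

lemma sign_R2h: "dl i * (sgn_par (tau m i k) (tau m k j) * sgn_par (tau m i k) (tau m j i)) = dl k"
  by (auto simp: dl_def sgn_par_def tau_def)

lemma R2h:
  assumes ij: "vld i j" and ik: "vld i k" and kj: "vld k j"
  shows "hh i j (a * b) c \<approx> hh i k a (b * c) + hh k j b (c * a)"
proof -
  have ji: "vld j i" and ki: "vld k i" and jk: "vld j k" using ij ik kj by (auto simp: vld_def)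
  have FL: "v i k a \<in> FL" "v k j b \<in> FL" "v j i c \<in> FL" "v k i (b * c) \<in> FL" "v j k (c * a) \<in> FL"
    using ij ik kj ji ki jk by (auto intro: FLv)
  define s1 :: 'k where "s1 = sgn_par (tau m i k) (tau m k j)"
  define s2 :: 'k where "s2 = sgn_par (tau m i k) (tau m j i)"
  have "h i j (a * b) c = br (v i j (a * b)) (v j i c)" by (simp add: h_def)
  also have "\<dots> \<approx> br (br (v i k a) (v k j b)) (v j i c)"
    by (rule cg_brL[OF cg_sym[OF R3[OF ik kj]]]) (use ij FL in \<open>auto simp: vld_def\<close>)
  also have "\<dots> \<approx> br (v i k a) (br (v k j b) (v j i c)) - smul s1 (br (v k j b) (br (v i k a) (v j i c)))"
    unfolding s1_def by (rule LZ[OF FL(1-3) homog_v homog_v homog_v])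
  also have "\<dots> \<approx> br (v i k a) (v k i (b * c)) - smul s1 (br (v k j b) (- smul s2 (v j k (c * a))))"
  proof (rule cg_diff)
    show "br (v i k a) (br (v k j b) (v j i c)) \<approx> br (v i k a) (v k i (b * c))"
      by (rule cg_brR[OF R3[OF kj ji]]) (use ik FL in \<open>auto simp: vld_def\<close>)
    show "smul s1 (br (v k j b) (br (v i k a) (v j i c))) \<approx> smul s1 (br (v k j b) (- smul s2 (v j k (c * a))))"
      unfolding s2_def
      by (rule cg_smul, rule cg_brR[OF R4[OF ik ji]]) (use kj FL in \<open>auto simp: vld_def\<close>)
  qed
  also have "\<dots> = h i k a (b * c) + smul (s1 * s2) (h k j b (c * a))"
    by (simp add: h_def br_neg_right br_smul_right)
  finally have e: "h i j (a * b) c \<approx> h i k a (b * c) + smul (s1 * s2) (h k j b (c * a))" .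
  have "hh i j (a * b) c \<approx> smul (dl i) (h i k a (b * c) + smul (s1 * s2) (h k j b (c * a)))"
    unfolding hh_def by (rule cg_smul[OF e])
  also have "\<dots> = hh i k a (b * c) + hh k j b (c * a)"
    using sign_R2h[of i k j] by (simp add: hh_def SM.scale_right_distrib s1_def s2_def)
  finally show ?thesis .
qed

lemma vld_distinct: "vld i j \<Longrightarrow> vld i k \<Longrightarrow> vld k j \<Longrightarrow> True" by simp

lemma alpha: "vld i j \<Longrightarrow> vld i k \<Longrightarrow> vld k j \<Longrightarrow> hh i j a c \<approx> hh i k a c + hh k j 1 (c * a)"
  using R2h[of i j k a 1 c] by simp
lemma beta: "vld i j \<Longrightarrow> vld i k \<Longrightarrow> vld k j \<Longrightarrow> hh i j b c \<approx> hh i k 1 (b * c) + hh k j b c"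
  using R2h[of i j k 1 b c] by simp
lemma gamma: "vld i j \<Longrightarrow> vld i k \<Longrightarrow> vld k j \<Longrightarrow> hh i j 1 c \<approx> hh i k 1 c + hh k j 1 c"
  using beta[of i j k 1 c] by simp

lemma third: "i \<in> J \<Longrightarrow> j \<in> J \<Longrightarrow> \<exists>k\<in>J. k \<noteq> i \<and> k \<noteq> j"
proof -
  have "\<exists>k\<in>{1, 2, 3::nat}. k \<noteq> i \<and> k \<noteq> j" by auto
  then show ?thesis using idx1 idx2 idx3 by blast
qed

lemma delta: "vld j k \<Longrightarrow> hh k j 1 c \<approx> - hh j k 1 c"
proof -
  assume jk: "vld j k"
  then obtain i where i: "i \<in> J" "i \<noteq> j" "i \<noteq> k" using third[of j k] by (auto simp: vld_def)
  have ij: "vld i j" and ik: "vld i k" and kj: "vld k j" using i jk by (auto simp: vld_def)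
  have 1: "hh i j 1 c - (hh i k 1 c + hh k j 1 c) \<in> I" using gamma[OF ij ik kj] by (simp add: cg_def)
  have 2: "hh i k 1 c - (hh i j 1 c + hh j k 1 c) \<in> I" using gamma[OF ik ij jk] by (simp add: cg_def)
  have "hh k j 1 c - - hh j k 1 c = - ((hh i j 1 c - (hh i k 1 c + hh k j 1 c)) + (hh i k 1 c - (hh i j 1 c + hh j k 1 c)))"
    by (simp add: algebra_simps)
  also have "\<dots> \<in> I" using 1 2 by (intro I_neg I_add)
  finally show ?thesis by (simp add: cg_def)
qed

subsection \<open>Lpp kills boundaries\<close>

lemma vld13 [simp]: "vld 1 3" and vld31 [simp]: "vld 3 1" and vld32 [simp]: "vld 3 2" and vld23 [simp]: "vld 2 3"
  and vld21 [simp]: "vld 2 1"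
  using idx1 idx2 idx3 by (auto simp: vld_def)

lemma vld13' [simp]: "vld (Suc 0) 3" and vld31' [simp]: "vld 3 (Suc 0)" and vld21' [simp]: "vld 2 (Suc 0)"
  using idx1 idx2 idx3 by (auto simp: vld_def)

lemma Lpp_d2t: "Lpp (gen (a0 * a1, a2) - gen (a0, a1 * a2) - gen (a1, a2 * a0)) \<in> I"
proof -
  define x where "x = a1 * a2 * a0"
  have 1: "hh 1 2 (a0 * a1) a2 - (hh 1 3 a0 (a1 * a2) + hh 3 2 a1 (a2 * a0)) \<in> I"
    using R2h[of 1 2 3 a0 a1 a2] by (simp add: cg_def)
  have 2: "hh 1 3 a0 (a1 * a2) - (hh 1 2 a0 (a1 * a2) + hh 2 3 1 x) \<in> I"
    using alpha[of 1 3 2 a0 "a1 * a2"] by (simp add: cg_def x_def)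
  have 3: "hh 1 2 a1 (a2 * a0) - (hh 1 3 1 x + hh 3 2 a1 (a2 * a0)) \<in> I"
    using beta[of 1 2 3 a1 "a2 * a0"] by (simp add: cg_def x_def mult.assoc)
  have 4: "hh 1 3 1 x - (hh 1 2 1 x + hh 2 3 1 x) \<in> I"
    using gamma[of 1 3 2 x] by (simp add: cg_def)
  have "Lpp (gen (a0 * a1, a2) - gen (a0, a1 * a2) - gen (a1, a2 * a0))
      = (hh 1 2 (a0 * a1) a2 - hh 1 2 1 (a0 * a1 * a2)) - (hh 1 2 a0 (a1 * a2) - hh 1 2 1 (a0 * (a1 * a2)))
        - (hh 1 2 a1 (a2 * a0) - hh 1 2 1 (a1 * (a2 * a0)))"
    by (simp add: Lpp_diff Lpp_gen)
  also have "\<dots> = (hh 1 2 (a0 * a1) a2 - (hh 1 3 a0 (a1 * a2) + hh 3 2 a1 (a2 * a0)))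
     + (hh 1 3 a0 (a1 * a2) - (hh 1 2 a0 (a1 * a2) + hh 2 3 1 x))
     - (hh 1 2 a1 (a2 * a0) - (hh 1 3 1 x + hh 3 2 a1 (a2 * a0)))
     - (hh 1 3 1 x - (hh 1 2 1 x + hh 2 3 1 x))"
    by (simp add: x_def mult.assoc algebra_simps)
  also have "\<dots> \<in> I" by (rule I_diff[OF I_diff[OF I_add[OF 1 2] 3] 4])
  finally show ?thesis .
qed

lemma I_cg: "x \<approx> y \<Longrightarrow> x - y \<in> I" by (simp add: cg_def)

lemma Lpp_bil: "x \<in> bilin_rels sc \<Longrightarrow> Lpp x \<in> I"
  unfolding bilin_rels_def
proof (elim UnE CollectE exE conjE)
  fix a a' b assume x: "x = gen (a + a', b) - gen (a, b) - gen (a', b)"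
  have "Lpp x = (hh 1 2 (a + a') b - (hh 1 2 a b + hh 1 2 a' b))
     - (hh 1 2 1 (a * b + a' * b) - (hh 1 2 1 (a * b) + hh 1 2 1 (a' * b)))"
    by (simp add: x Lpp_diff Lpp_add Lpp_gen distrib_right algebra_simps)
  also have "\<dots> \<in> I" by (intro I_diff I_cg hh_addL hh_addR vld12)
  finally show ?thesis .
next
  fix a b b' assume x: "x = gen (a, b + b') - gen (a, b) - gen (a, b')"
  have "Lpp x = (hh 1 2 a (b + b') - (hh 1 2 a b + hh 1 2 a b'))
     - (hh 1 2 1 (a * b + a * b') - (hh 1 2 1 (a * b) + hh 1 2 1 (a * b')))"
    by (simp add: x Lpp_diff Lpp_add Lpp_gen distrib_left algebra_simps)
  also have "\<dots> \<in> I" by (intro I_diff I_cg hh_addR vld12)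
  finally show ?thesis .
next
  fix c a b assume x: "x = gen (sc c a, b) - smul c (gen (a, b))"
  have "Lpp x = (hh 1 2 (sc c a) b - smul c (hh 1 2 a b)) - (hh 1 2 1 (sc c (a * b)) - smul c (hh 1 2 1 (a * b)))"
    by (simp add: x Lpp_diff Lpp_gen Lpp_smul sc_mult_left SM.scale_right_diff_distrib algebra_simps)
  also have "\<dots> \<in> I" by (intro I_diff I_cg hh_scL hh_scR vld12)
  finally show ?thesis .
next
  fix c a b assume x: "x = gen (a, sc c b) - smul c (gen (a, b))"
  have "Lpp x = (hh 1 2 a (sc c b) - smul c (hh 1 2 a b)) - (hh 1 2 1 (sc c (a * b)) - smul c (hh 1 2 1 (a * b)))"
    by (simp add: x Lpp_diff Lpp_gen Lpp_smul sc_mult_right SM.scale_right_diff_distrib algebra_simps)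
  also have "\<dots> \<in> I" by (intro I_diff I_cg hh_scR vld12)
  finally show ?thesis .
qed

lemma Lpp_N: "x \<in> N \<Longrightarrow> Lpp x \<in> I"
  unfolding tensor_null_def
proof (induct rule: SM.span_induct_alt)
  case base then show ?case by simp
next
  case (step c x y) then show ?case by (simp add: Lpp_add Lpp_smul I_add I_smul Lpp_bil)
qed

lemma Lpp_Bd: "x \<in> Bd \<Longrightarrow> Lpp x \<in> I"
proof -
  assume "x \<in> Bd"
  then obtain g b where x: "x = d2 g + b" and b: "b \<in> N" unfolding Bd_iff by blast
  have "Lpp (d2 g) = linx smul (\<lambda>q. Lpp (d2t q)) g"
    unfolding d2_linx by (rule linx_hom) (simp_all add: Lpp_add Lpp_smul)
  also have "\<dots> \<in> I"
    unfolding linx_def by (intro I_sum I_smul) (auto simp: d2t_def Lpp_d2t split: prod.split)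
  finally show ?thesis using x Lpp_N[OF b] by (simp add: Lpp_add I_add)
qed

end


context stlc
begin

section \<open>Spanning\<close>

definition Vset :: "('a tr \<Rightarrow>\<^sub>0 'k) set" where "Vset = {v i j a | i j a. vld i j}"
definition Hset :: "('a tr \<Rightarrow>\<^sub>0 'k) set" where "Hset = {h i j a b | i j a b. vld i j}"
definition Sset :: "('a tr \<Rightarrow>\<^sub>0 'k) set" where "Sset = {x. \<exists>y\<in>SM.span (Vset \<union> Hset). x \<approx> y}"
definition VSset :: "('a tr \<Rightarrow>\<^sub>0 'k) set" where "VSset = {x. \<exists>y\<in>SM.span Vset. x \<approx> y}"

lemma S_cg: "x \<approx> y \<Longrightarrow> y \<in> Sset \<Longrightarrow> x \<in> Sset"
proof -
  assume a: "x \<approx> y" "y \<in> Sset"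
  then obtain z where "z \<in> SM.span (Vset \<union> Hset)" "y \<approx> z" unfolding Sset_def by blast
  then show ?thesis unfolding Sset_def using cg_trans[OF a(1)] by blast
qed
lemma VS_cg: "x \<approx> y \<Longrightarrow> y \<in> VSset \<Longrightarrow> x \<in> VSset"
proof -
  assume a: "x \<approx> y" "y \<in> VSset"
  then obtain z where "z \<in> SM.span Vset" "y \<approx> z" unfolding VSset_def by blast
  then show ?thesis unfolding VSset_def using cg_trans[OF a(1)] by blast
qed
lemma S_add: "x \<in> Sset \<Longrightarrow> y \<in> Sset \<Longrightarrow> x + y \<in> Sset"
proof -
  assume "x \<in> Sset" "y \<in> Sset"
  then obtain x' y' where "x' \<in> SM.span (Vset \<union> Hset)" "x \<approx> x'" "y' \<in> SM.span (Vset \<union> Hset)" "y \<approx> y'"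
    unfolding Sset_def by blast
  then have "x' + y' \<in> SM.span (Vset \<union> Hset)" "x + y \<approx> x' + y'" by (auto intro: SM.span_add cg_add)
  then show ?thesis unfolding Sset_def by blast
qed
lemma VS_add: "x \<in> VSset \<Longrightarrow> y \<in> VSset \<Longrightarrow> x + y \<in> VSset"
proof -
  assume "x \<in> VSset" "y \<in> VSset"
  then obtain x' y' where "x' \<in> SM.span Vset" "x \<approx> x'" "y' \<in> SM.span Vset" "y \<approx> y'"
    unfolding VSset_def by blast
  then have "x' + y' \<in> SM.span Vset" "x + y \<approx> x' + y'" by (auto intro: SM.span_add cg_add)
  then show ?thesis unfolding VSset_def by blast
qed
lemma S_smul: "x \<in> Sset \<Longrightarrow> smul c x \<in> Sset"
proof -
  assume "x \<in> Sset"
  then obtain x' where "x' \<in> SM.span (Vset \<union> Hset)" "x \<approx> x'" unfolding Sset_def by blast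
  then have "smul c x' \<in> SM.span (Vset \<union> Hset)" "smul c x \<approx> smul c x'" by (auto intro: SM.span_scale cg_smul)
  then show ?thesis unfolding Sset_def by blast
qed
lemma VS_smul: "x \<in> VSset \<Longrightarrow> smul c x \<in> VSset"
proof -
  assume "x \<in> VSset"
  then obtain x' where "x' \<in> SM.span Vset" "x \<approx> x'" unfolding VSset_def by blast
  then have "smul c x' \<in> SM.span Vset" "smul c x \<approx> smul c x'" by (auto intro: SM.span_scale cg_smul)
  then show ?thesis unfolding VSset_def by blast
qed
lemma S_zero: "0 \<in> Sset"
  unfolding Sset_def using SM.span_zero cg_refl by blast
lemma VS_zero: "0 \<in> VSset"
  unfolding VSset_def using SM.span_zero cg_refl by blast
lemma S_neg: "x \<in> Sset \<Longrightarrow> - x \<in> Sset"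
  using S_smul[of x "-1"] by simp
lemma VS_neg: "x \<in> VSset \<Longrightarrow> - x \<in> VSset"
  using VS_smul[of x "-1"] by simp
lemma S_diff: "x \<in> Sset \<Longrightarrow> y \<in> Sset \<Longrightarrow> x - y \<in> Sset"
  using S_add[of x "- y"] S_neg[of y] by simp
lemma S_sum: "(\<And>x. x \<in> A \<Longrightarrow> F x \<in> Sset) \<Longrightarrow> sum F A \<in> Sset"
proof (induct A rule: infinite_finite_induct)
  case (infinite A) then show ?case by (simp add: S_zero)
next
  case empty then show ?case by (simp add: S_zero)
next
  case (insert x A) then show ?case by (simp add: S_add)
qed
lemma VS_S: "x \<in> VSset \<Longrightarrow> x \<in> Sset"
proof -
  assume "x \<in> VSset"
  then obtain y where "y \<in> SM.span Vset" "x \<approx> y" unfolding VSset_def by blast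
  moreover have "SM.span Vset \<subseteq> SM.span (Vset \<union> Hset)" by (rule SM.span_mono) blast
  ultimately show ?thesis unfolding Sset_def by blast
qed
lemma v_VS: "vld i j \<Longrightarrow> v i j a \<in> VSset"
proof -
  assume "vld i j"
  then have "v i j a \<in> Vset" unfolding Vset_def by blast
  then have "v i j a \<in> SM.span Vset" by (rule SM.span_base)
  then show ?thesis unfolding VSset_def using cg_refl by blast
qed
lemma h_S: "vld i j \<Longrightarrow> h i j a b \<in> Sset"
proof -
  assume "vld i j"
  then have "h i j a b \<in> Vset \<union> Hset" unfolding Hset_def by blast
  then have "h i j a b \<in> SM.span (Vset \<union> Hset)" by (rule SM.span_base)
  then show ?thesis unfolding Sset_def using cg_refl by blast
qed
lemma S_I: "x \<in> I \<Longrightarrow> x \<in> Sset"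
  using S_cg[OF cg_I S_zero] .
lemma VS_I: "x \<in> I \<Longrightarrow> x \<in> VSset"
  using VS_cg[OF cg_I VS_zero] .

lemma gens_FL: "g \<in> Vset \<union> Hset \<Longrightarrow> g \<in> FL"
  unfolding Vset_def Hset_def by (auto intro: FLv FL_h)

lemma gens_homog: "g \<in> Vset \<union> Hset \<Longrightarrow> \<exists>p. homog m p g"
  unfolding Vset_def Hset_def h_def by (auto intro: homog_v homog_br)

lemma span_FL: "x \<in> SM.span (Vset \<union> Hset) \<Longrightarrow> x \<in> FL"
proof (induct rule: SM.span_induct_alt)
  case base then show ?case by simp
next
  case (step c x y)
  have "x \<in> FL" using step(1) by (rule gens_FL)
  then have "smul c x \<in> FL" by (rule FL_smul)
  then show ?case using step(2) by (rule FL_add)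
qed

lemma S_FL': "y \<in> SM.span (Vset \<union> Hset) \<Longrightarrow> y \<in> FL" by (rule span_FL)

lemma A2: "vld k l \<Longrightarrow> vld i j \<Longrightarrow> \<not> (l = i \<and> k = j) \<Longrightarrow> br (v k l c) (v i j a) \<in> VSset"
proof -
  assume kl: "vld k l" and ij: "vld i j" and no: "\<not> (l = i \<and> k = j)"
  consider (a) "l = i" "k \<noteq> j" | (b) "k = j" "l \<noteq> i" | (c) "l \<noteq> i" "k \<noteq> j" using no by blast
  then show ?thesis
  proof cases
    case a
    then have kj: "vld k j" using kl ij by (auto simp: vld_def)
    have "br (v k l c) (v i j a) \<approx> v k j (c * a)" using R3[of k i j c a] kl ij a by simp
    then show ?thesis by (rule VS_cg) (rule v_VS[OF kj])
  next
    case b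
    then have il: "vld i l" using kl ij by (auto simp: vld_def)
    have "br (v k l c) (v i j a) \<approx> - smul (sgn_par (tau m k l) (tau m i k)) (v i l (a * c))"
      using R4[of k l i c a] kl ij b by simp
    then show ?thesis by (rule VS_cg) (intro VS_neg VS_smul v_VS[OF il])
  next
    case c
    have "br (v k l c) (v i j a) \<approx> 0" using R2[OF kl ij] c by simp
    then show ?thesis by (rule VS_cg) (rule VS_zero)
  qed
qed

lemma A1: "vld k l \<Longrightarrow> vld i j \<Longrightarrow> br (v k l c) (v i j a) \<in> Sset"
proof (cases "l = i \<and> k = j")
  case True
  assume "vld k l"
  then have "br (v k l c) (v i j a) = h k l c a" using True by (simp add: h_def)
  then show ?thesis using h_S[OF \<open>vld k l\<close>] by simp
next
  case False
  assume "vld k l" "vld i j"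
  then show ?thesis using A2 False VS_S by blast
qed

lemma VS_brL: "w \<approx> w' \<Longrightarrow> z \<in> FL \<Longrightarrow> br w' z \<in> VSset \<Longrightarrow> br w z \<in> VSset"
  by (rule VS_cg[OF cg_brL])
lemma VS_brR: "w \<approx> w' \<Longrightarrow> z \<in> FL \<Longrightarrow> br z w' \<in> VSset \<Longrightarrow> br z w \<in> VSset"
  by (rule VS_cg[OF cg_brR])

lemma B:
  assumes kl: "vld k l" and ij: "vld i j" and n1: "\<not> (k = j \<and> l = i)" and n2: "\<not> (k = i \<and> l = j)"
  shows "br (v k l c) (h i j a b) \<in> VSset"
proof -
  have ji: "vld j i" using ij by (auto simp: vld_def)
  have FL3: "v k l c \<in> FL" "v i j a \<in> FL" "v j i b \<in> FL" using kl ij ji by (auto intro: FLv)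
  have T1: "br (br (v k l c) (v i j a)) (v j i b) \<in> VSset"
  proof -
    consider (a) "l = i" "k \<noteq> j" | (b) "k = j" "l \<noteq> i" | (c) "l \<noteq> i" "k \<noteq> j" using n1 by blast
    then show ?thesis
    proof cases
      case a
      then have kj: "vld k j" and "k \<noteq> i" using kl ij by (auto simp: vld_def)
      have "br (v k l c) (v i j a) \<approx> v k j (c * a)" using R3[of k i j c a] kl ij a by simp
      moreover have "br (v k j (c * a)) (v j i b) \<in> VSset" using A2[OF kj ji] \<open>k \<noteq> i\<close> by blast
      ultimately show ?thesis using FL3 by (rule_tac VS_brL) auto
    next
      case b
      then have il: "vld i l" and "l \<noteq> j" using kl ij by (auto simp: vld_def)
      have "br (v k l c) (v i j a) \<approx> - smul (sgn_par (tau m k l) (tau m i k)) (v i l (a * c))"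
        using R4[of k l i c a] kl ij b by simp
      moreover have "br (- smul (sgn_par (tau m k l) (tau m i k)) (v i l (a * c))) (v j i b) \<in> VSset"
        unfolding br_neg_left br_smul_left using A2[OF il ji] \<open>l \<noteq> j\<close> by (blast intro: VS_neg VS_smul)
      ultimately show ?thesis using FL3 by (rule_tac VS_brL) auto
    next
      case c
      have "br (v k l c) (v i j a) \<approx> 0" using R2[OF kl ij] c by simp
      then show ?thesis using VS_brL[of _ 0] FL3 VS_zero by simp
    qed
  qed
  have T2: "br (v i j a) (br (v k l c) (v j i b)) \<in> VSset"
  proof -
    consider (a) "l = j" "k \<noteq> i" | (b) "k = i" "l \<noteq> j" | (c) "l \<noteq> j" "k \<noteq> i" using n2 by blast
    then show ?thesis
    proof cases
      case a
      then have ki: "vld k i" and "j \<noteq> k" using kl ij by (auto simp: vld_def)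
      have "br (v k l c) (v j i b) \<approx> v k i (c * b)" using R3[of k j i c b] kl ji a by simp
      moreover have "br (v i j a) (v k i (c * b)) \<in> VSset" using A2[OF ij ki] \<open>j \<noteq> k\<close> by blast
      ultimately show ?thesis using FL3 by (rule_tac VS_brR) auto
    next
      case b
      then have jl: "vld j l" and "i \<noteq> l" using kl ij by (auto simp: vld_def)
      have "br (v k l c) (v j i b) \<approx> - smul (sgn_par (tau m k l) (tau m j k)) (v j l (b * c))"
        using R4[of k l j c b] kl ji b by simp
      moreover have "br (v i j a) (- smul (sgn_par (tau m k l) (tau m j k)) (v j l (b * c))) \<in> VSset"
        unfolding br_neg_right br_smul_right using A2[OF ij jl] \<open>i \<noteq> l\<close> by (blast intro: VS_neg VS_smul)
      ultimately show ?thesis using FL3 by (rule_tac VS_brR) auto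
    next
      case c
      have "br (v k l c) (v j i b) \<approx> 0" using R2[OF kl ji] c by simp
      then show ?thesis using VS_brR[of _ 0] FL3 VS_zero by simp
    qed
  qed
  have "br (v k l c) (h i j a b) \<approx> br (br (v k l c) (v i j a)) (v j i b)
      + smul (sgn_par (tau m k l) (tau m i j)) (br (v i j a) (br (v k l c) (v j i b)))"
    unfolding h_def by (rule LZ'[OF FL3 homog_v homog_v homog_v])
  then show ?thesis by (rule VS_cg) (intro VS_add VS_smul T1 T2)
qed

lemma D_V: "vld k l \<Longrightarrow> x \<in> VSset \<Longrightarrow> x \<in> FL \<Longrightarrow> br (v k l c) x \<in> Sset"
proof -
  assume kl: "vld k l" and x: "x \<in> VSset" "x \<in> FL"
  then obtain y where y: "y \<in> SM.span Vset" "x \<approx> y" unfolding VSset_def by blast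
  have "br (v k l c) y \<in> Sset" using y(1)
  proof (induct rule: SM.span_induct_alt)
    case base then show ?case by (simp add: S_zero)
  next
    case (step d g z)
    then obtain i j a where g: "g = v i j a" "vld i j" unfolding Vset_def by blast
    show ?case unfolding br_add_right br_smul_right
      using step g A1[OF kl g(2)] by (blast intro: S_add S_smul)
  qed
  then show ?thesis by (rule S_cg[OF cg_brR[OF y(2) FLv[OF kl]]])
qed

lemma C:
  assumes kl: "vld k l" and ij: "vld i j"
  shows "br (v k l c) (h i j a b) \<in> Sset"
proof (cases "(k = j \<and> l = i) \<or> (k = i \<and> l = j)")
  case False then show ?thesis using B[OF kl ij] VS_S by blast
next
  case True
  obtain p where p: "p \<in> J" "p \<noteq> i" "p \<noteq> j" using third[of i j] ij by (auto simp: vld_def)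
  have kp: "vld k p" and pl: "vld p l" using p True kl ij by (auto simp: vld_def)
  have hF: "h i j a b \<in> FL" using FL_h[OF ij] .
  obtain q where hq: "homog m q (h i j a b)" unfolding h_def by (blast intro: homog_br homog_v)
  have "v k l c \<approx> br (v k p c) (v p l 1)" using R3[OF kp pl, of c 1] kl by (auto simp: vld_def intro: cg_sym)
  then have "br (v k l c) (h i j a b) \<approx> br (br (v k p c) (v p l 1)) (h i j a b)"
    using cg_brL hF by blast
  also have "\<dots> \<approx> br (v k p c) (br (v p l 1) (h i j a b)) - smul (sgn_par (tau m k p) (tau m p l)) (br (v p l 1) (br (v k p c) (h i j a b)))"
    by (rule LZ[OF FLv[OF kp] FLv[OF pl] hF homog_v homog_v hq])
  finally have e: "br (v k l c) (h i j a b) \<approx> br (v k p c) (br (v p l 1) (h i j a b)) - smul (sgn_par (tau m k p) (tau m p l)) (br (v p l 1) (br (v k p c) (h i j a b)))" .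
  have 1: "br (v p l 1) (h i j a b) \<in> VSset" using B[OF pl ij] p by blast
  have 2: "br (v k p c) (h i j a b) \<in> VSset" using B[OF kp ij] p by blast
  have "br (v k p c) (br (v p l 1) (h i j a b)) \<in> Sset"
    by (rule D_V[OF kp 1]) (intro FL_br FLv[OF pl] hF)
  moreover have "br (v p l 1) (br (v k p c) (h i j a b)) \<in> Sset"
    by (rule D_V[OF pl 2]) (intro FL_br FLv[OF kp] hF)
  ultimately show ?thesis using e by (intro S_cg[OF e] S_diff S_smul)
qed

lemma D_S: "vld k l \<Longrightarrow> x \<in> Sset \<Longrightarrow> x \<in> FL \<Longrightarrow> br (v k l c) x \<in> Sset"
proof -
  assume kl: "vld k l" and x: "x \<in> Sset" "x \<in> FL"
  then obtain y where y: "y \<in> SM.span (Vset \<union> Hset)" "x \<approx> y" unfolding Sset_def by blast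
  have "br (v k l c) y \<in> Sset" using y(1)
  proof (induct rule: SM.span_induct_alt)
    case base then show ?case by (simp add: S_zero)
  next
    case (step d g z)
    have "br (v k l c) g \<in> Sset"
      using step(1) unfolding Vset_def Hset_def using A1[OF kl] C[OF kl] by blast
    then show ?case unfolding br_add_right br_smul_right
      using step by (blast intro: S_add S_smul)
  qed
  then show ?thesis by (rule S_cg[OF cg_brR[OF y(2) FLv[OF kl]]])
qed

lemma span_S: "y \<in> SM.span (Vset \<union> Hset) \<Longrightarrow> y \<in> Sset"
  unfolding Sset_def using cg_refl by blast

lemma E: "vld i j \<Longrightarrow> g \<in> Vset \<union> Hset \<Longrightarrow> br (h i j a b) g \<in> Sset"
proof -
  assume ij: "vld i j" and g: "g \<in> Vset \<union> Hset"
  have ji: "vld j i" using ij by (auto simp: vld_def)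
  obtain p where hp: "homog m p g" using gens_homog[OF g] by blast
  have gF: "g \<in> FL" using gens_FL[OF g] .
  have gS: "g \<in> Sset" using g span_S SM.span_base by blast
  have e: "br (h i j a b) g \<approx> br (v i j a) (br (v j i b) g) - smul (sgn_par (tau m i j) (tau m j i)) (br (v j i b) (br (v i j a) g))"
    unfolding h_def by (rule LZ[OF FLv[OF ij] FLv[OF ji] gF homog_v homog_v hp])
  have "br (v j i b) g \<in> Sset" by (rule D_S[OF ji gS gF])
  then have 1: "br (v i j a) (br (v j i b) g) \<in> Sset" by (rule D_S[OF ij]) (intro FL_br FLv[OF ji] gF)
  have "br (v i j a) g \<in> Sset" by (rule D_S[OF ij gS gF])
  then have 2: "br (v j i b) (br (v i j a) g) \<in> Sset" by (rule D_S[OF ji]) (intro FL_br FLv[OF ij] gF)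
  show ?thesis using 1 2 by (intro S_cg[OF e] S_diff S_smul)
qed

lemma F0: "vld i j \<Longrightarrow> y \<in> SM.span (Vset \<union> Hset) \<Longrightarrow> br (h i j a b) y \<in> Sset"
proof -
  assume ij: "vld i j" and y: "y \<in> SM.span (Vset \<union> Hset)"
  from y show ?thesis
  proof (induct y rule: SM.span_induct_alt)
    case base then show ?case by (simp add: S_zero)
  next
    case (step d g' y')
    have "br (h i j a b) g' \<in> Sset" using E[OF ij step(1)] .
    then show ?case unfolding br_add_right br_smul_right
      using step(2) by (intro S_add S_smul)
  qed
qed

lemma F:
  assumes y: "y \<in> SM.span (Vset \<union> Hset)"
  shows "x \<in> SM.span (Vset \<union> Hset) \<Longrightarrow> br x y \<in> Sset"
proof (induct x rule: SM.span_induct_alt)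
  case base then show ?case by (simp add: S_zero)
next
  case (step c g x')
  have "br g y \<in> Sset"
  proof (cases "g \<in> Vset")
    case True
    then obtain i j a where g: "g = v i j a" "vld i j" unfolding Vset_def by blast
    show ?thesis unfolding g(1) by (rule D_S[OF g(2) span_S[OF y] span_FL[OF y]])
  next
    case False
    with step(1) have "g \<in> Hset" by blast
    then obtain i j a b where g: "g = h i j a b" "vld i j" unfolding Hset_def by blast
    show ?thesis unfolding g(1) by (rule F0[OF g(2) y])
  qed
  then show ?case unfolding br_add_left br_smul_left using step(2) by (intro S_add S_smul)
qed

lemma G: "x \<in> Sset \<Longrightarrow> y \<in> Sset \<Longrightarrow> y \<in> FL \<Longrightarrow> br x y \<in> Sset"
proof -
  assume x: "x \<in> Sset" and y: "y \<in> Sset" "y \<in> FL"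
  obtain x' where x': "x' \<in> SM.span (Vset \<union> Hset)" "x \<approx> x'" using x unfolding Sset_def by blast
  obtain y' where y': "y' \<in> SM.span (Vset \<union> Hset)" "y \<approx> y'" using y unfolding Sset_def by blast
  have "br x y \<approx> br x' y'" by (rule cg_br[OF x'(2) y'(2) span_FL[OF x'(1)] y(2)])
  then show ?thesis by (rule S_cg[OF _ F[OF y'(1) x'(1)]])
qed

lemma tree_S: "valid m n t \<Longrightarrow> gen t \<in> Sset"
proof (induct t)
  case (Gen i j a)
  then have "vld i j" by (simp add: vld_def)
  then show ?case using v_VS VS_S by (metis v_def)
next
  case (Br s t)
  then show ?case using G[of "gen s" "gen t"] FL_gen by (metis br_gen valid.simps(2))
qed

lemma FL_S: "f \<in> FL \<Longrightarrow> f \<in> Sset"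
proof -
  assume f: "f \<in> FL"
  have "f = linx smul gen f" by (simp add: linx_smul_gen)
  also have "\<dots> \<in> Sset" unfolding linx_def
    using f by (intro S_sum S_smul tree_S) (auto simp: FreeL_def)
  finally show ?thesis .
qed

end


context stlc
begin

section \<open>Canonical forms\<close>

definition OD :: "(nat \<times> nat) set" where "OD = {q. fst q \<in> J \<and> snd q \<in> J \<and> fst q \<noteq> snd q}"
definition KK :: "nat set" where "KK = J - {1}"

lemma finite_OD [simp]: "finite OD"
  by (rule finite_subset[of _ "J \<times> J"]) (auto simp: OD_def)
lemma finite_KK [simp]: "finite KK"
  by (simp add: KK_def)
lemma OD_vld: "q \<in> OD \<Longrightarrow> vld (fst q) (snd q)"
  by (simp add: OD_def vld_def)
lemma KK_vld: "k \<in> KK \<Longrightarrow> vld 1 k"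
  using idx1 by (auto simp: KK_def vld_def)
lemma KK_vld': "k \<in> KK \<Longrightarrow> vld (Suc 0) k"
  using KK_vld by simp
lemma vld_OD: "vld i j \<Longrightarrow> (i, j) \<in> OD"
  by (simp add: OD_def vld_def)
lemma vld_KK: "vld 1 k \<Longrightarrow> k \<in> KK"
  by (auto simp: KK_def vld_def)

definition VSum :: "(nat \<times> nat \<Rightarrow> 'a) \<Rightarrow> ('a tr \<Rightarrow>\<^sub>0 'k)" where
  "VSum x = (\<Sum>q\<in>OD. v (fst q) (snd q) (x q))"
definition DSum :: "(nat \<Rightarrow> 'a) \<Rightarrow> ('a tr \<Rightarrow>\<^sub>0 'k)" where
  "DSum y = (\<Sum>k\<in>KK. hh 1 k 1 (y k))"

definition Canon :: "('a tr \<Rightarrow>\<^sub>0 'k) set" where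
  "Canon = {VSum x + DSum y + Lpp u | x y u. True}"
definition CI :: "('a tr \<Rightarrow>\<^sub>0 'k) set" where
  "CI = {f. \<exists>c\<in>Canon. f \<approx> c}"

lemma VSum_add: "VSum x + VSum x' \<approx> VSum (\<lambda>q. x q + x' q)"
  unfolding VSum_def sum.distrib[symmetric]
  by (rule cg_sum) (rule cg_sym, rule v_add, rule OD_vld)
lemma DSum_add: "DSum y + DSum y' \<approx> DSum (\<lambda>k. y k + y' k)"
  unfolding DSum_def sum.distrib[symmetric]
  by (rule cg_sum) (rule cg_sym, rule hh_addR, rule KK_vld)
lemma VSum_smul: "smul c (VSum x) \<approx> VSum (\<lambda>q. sc c (x q))"
  unfolding VSum_def SM.scale_sum_right
  by (rule cg_sum) (rule cg_sym, rule v_sc, rule OD_vld)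
lemma DSum_smul: "smul c (DSum y) \<approx> DSum (\<lambda>k. sc c (y k))"
  unfolding DSum_def SM.scale_sum_right
  by (rule cg_sum) (rule cg_sym, rule hh_scR, rule KK_vld)
lemma VSum_zero: "VSum (\<lambda>q. 0) \<approx> 0"
proof -
  have "VSum (\<lambda>q. 0) \<approx> (\<Sum>q\<in>OD. 0)" unfolding VSum_def by (rule cg_sum) (rule v_zero, rule OD_vld)
  then show ?thesis by simp
qed
lemma DSum_zero: "DSum (\<lambda>k. 0) \<approx> 0"
proof -
  have "DSum (\<lambda>k. 0) \<approx> (\<Sum>k\<in>KK. 0)" unfolding DSum_def by (rule cg_sum) (rule hh_zeroR, rule KK_vld)
  then show ?thesis by simp
qed

lemma CI_cg: "f \<approx> g \<Longrightarrow> g \<in> CI \<Longrightarrow> f \<in> CI"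
proof -
  assume a: "f \<approx> g" "g \<in> CI"
  then obtain c where "c \<in> Canon" "g \<approx> c" unfolding CI_def by blast
  then show ?thesis unfolding CI_def using cg_trans[OF a(1)] by blast
qed

lemma Canon_CI: "VSum x + DSum y + Lpp u \<in> CI"
  unfolding CI_def Canon_def using cg_refl by blast

lemma CI_add: "f \<in> CI \<Longrightarrow> g \<in> CI \<Longrightarrow> f + g \<in> CI"
proof -
  assume "f \<in> CI" "g \<in> CI"
  then obtain x y u x' y' u' where f: "f \<approx> VSum x + DSum y + Lpp u" and g: "g \<approx> VSum x' + DSum y' + Lpp u'"
    unfolding CI_def Canon_def by blast
  have "f + g \<approx> (VSum x + VSum x') + (DSum y + DSum y') + Lpp (u + u')"
    using cg_add[OF f g] by (simp add: Lpp_add algebra_simps)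
  also have "\<dots> \<approx> VSum (\<lambda>q. x q + x' q) + DSum (\<lambda>k. y k + y' k) + Lpp (u + u')"
    by (intro cg_add VSum_add DSum_add cg_refl)
  finally show ?thesis using Canon_CI CI_cg by blast
qed

lemma CI_smul: "f \<in> CI \<Longrightarrow> smul c f \<in> CI"
proof -
  assume "f \<in> CI"
  then obtain x y u where f: "f \<approx> VSum x + DSum y + Lpp u"
    unfolding CI_def Canon_def by blast
  have "smul c f \<approx> smul c (VSum x) + smul c (DSum y) + Lpp (smul c u)"
    using cg_smul[OF f, of c] by (simp add: Lpp_smul SM.scale_right_distrib)
  also have "\<dots> \<approx> VSum (\<lambda>q. sc c (x q)) + DSum (\<lambda>k. sc c (y k)) + Lpp (smul c u)"
    by (intro cg_add VSum_smul DSum_smul cg_refl)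
  finally show ?thesis using Canon_CI CI_cg by blast
qed

lemma CI_zero: "0 \<in> CI"
proof -
  have "(0 :: 'a tr \<Rightarrow>\<^sub>0 'k) \<approx> VSum (\<lambda>q. 0) + DSum (\<lambda>k. 0) + Lpp 0"
    using cg_sym[OF cg_add[OF VSum_zero DSum_zero]] by simp
  then show ?thesis using Canon_CI CI_cg by blast
qed

lemma CI_neg: "f \<in> CI \<Longrightarrow> - f \<in> CI"
  using CI_smul[of f "-1"] by simp
lemma CI_diff: "f \<in> CI \<Longrightarrow> g \<in> CI \<Longrightarrow> f - g \<in> CI"
  using CI_add[of f "- g"] CI_neg[of g] by simp

lemma v_CI: "vld k l \<Longrightarrow> v k l a \<in> CI"
proof -
  assume kl: "vld k l"
  have "VSum (\<lambda>q. if q = (k, l) then a else 0) \<approx> (\<Sum>q\<in>OD. if q = (k, l) then v k l a else 0)"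
    unfolding VSum_def
  proof (rule cg_sum)
    fix q assume q: "q \<in> OD"
    show "v (fst q) (snd q) (if q = (k, l) then a else 0) \<approx> (if q = (k, l) then v k l a else 0)"
      using v_zero[OF OD_vld[OF q]] by auto
  qed
  also have "\<dots> = v k l a" using vld_OD[OF kl] by (simp add: sum_if_eq)
  finally have "v k l a \<approx> VSum (\<lambda>q. if q = (k, l) then a else 0) + DSum (\<lambda>k. 0) + Lpp 0"
    using cg_sym cg_add[OF _ DSum_zero] by (metis add.right_neutral Lpp_zero)
  then show ?thesis using Canon_CI CI_cg by blast
qed

lemma D_CI: "vld 1 k \<Longrightarrow> hh 1 k 1 y \<in> CI"
proof -
  assume k: "vld 1 k"
  have "DSum (\<lambda>j. if j = k then y else 0) \<approx> (\<Sum>j\<in>KK. if j = k then hh 1 k 1 y else 0)"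
    unfolding DSum_def
  proof (rule cg_sum)
    fix j assume j: "j \<in> KK"
    show "hh 1 j 1 (if j = k then y else 0) \<approx> (if j = k then hh 1 k 1 y else 0)"
      using hh_zeroR[OF KK_vld[OF j]] by auto
  qed
  also have "\<dots> = hh 1 k 1 y" using vld_KK[OF k] by (simp add: sum_if_eq)
  finally have "hh 1 k 1 y \<approx> VSum (\<lambda>q. 0) + DSum (\<lambda>j. if j = k then y else 0) + Lpp 0"
    using cg_sym cg_add[OF VSum_zero] by (metis add.left_neutral add.right_neutral Lpp_zero)
  then show ?thesis using Canon_CI CI_cg by blast
qed

lemma Lpp_CI: "Lpp u \<in> CI"
proof -
  have "Lpp u \<approx> VSum (\<lambda>q. 0) + DSum (\<lambda>j. 0) + Lpp u"
    using cg_sym[OF cg_add[OF cg_add[OF VSum_zero DSum_zero] cg_refl[of "Lpp u"]]] by simp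
  then show ?thesis using Canon_CI CI_cg by blast
qed

lemma cg_solve: "x \<approx> y + z \<Longrightarrow> z \<approx> x - y"
proof -
  assume "x \<approx> y + z"
  then have "- (x - (y + z)) \<in> I" unfolding cg_def by (rule I_neg)
  moreover have "z - (x - y) = - (x - (y + z))" by (simp add: algebra_simps)
  ultimately show ?thesis unfolding cg_def by (simp only:)
qed

lemma hh12_CI: "hh 1 2 a b \<in> CI"
proof -
  have "hh 1 2 a b = Lpp (gen (a, b)) + hh 1 2 1 (a * b)" by (simp add: Lpp_gen)
  then show ?thesis using CI_add[OF Lpp_CI D_CI[OF vld12]] by simp
qed

lemma hh1j_CI: "vld 1 j \<Longrightarrow> hh 1 j a b \<in> CI"
proof (cases "j = 2")
  case True then show ?thesis using hh12_CI by simp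
next
  case False
  assume j: "vld 1 j"
  have 2: "vld 2 j" using j False idx2 by (auto simp: vld_def)
  have e1: "hh 1 j a b \<approx> hh 1 2 a b + hh 2 j 1 (b * a)" by (rule alpha[OF j vld12 2])
  have e2: "hh 2 j 1 (b * a) \<approx> hh 1 j 1 (b * a) - hh 1 2 1 (b * a)"
    by (rule cg_solve, rule gamma[OF j vld12 2])
  have "hh 1 j a b \<approx> hh 1 2 a b + (hh 1 j 1 (b * a) - hh 1 2 1 (b * a))"
    by (rule cg_trans[OF e1 cg_add[OF cg_refl e2]])
  then show ?thesis
    by (rule CI_cg) (intro CI_add CI_diff hh12_CI D_CI j vld12)
qed

lemma hh_CI_n1: "vld i j \<Longrightarrow> i \<noteq> 1 \<Longrightarrow> j \<noteq> 1 \<Longrightarrow> hh i j a b \<in> CI"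
proof -
  assume ij: "vld i j" and i: "i \<noteq> 1" and j: "j \<noteq> 1"
  have 1: "vld 1 j" "vld 1 i" using ij i j idx1 by (auto simp: vld_def)
  have "hh i j a b \<approx> hh 1 j a b - hh 1 i 1 (a * b)"
    by (rule cg_solve, rule beta[OF 1(1) 1(2) ij])
  then show ?thesis by (rule CI_cg) (intro CI_diff hh1j_CI D_CI 1)
qed

lemma hh_CI: "vld i j \<Longrightarrow> hh i j a b \<in> CI"
proof -
  assume ij: "vld i j"
  consider (a) "i = 1" | (b) "i \<noteq> 1" "j \<noteq> 1" | (c) "i \<noteq> 1" "j = 1" by blast
  then show ?thesis
  proof cases
    case a then show ?thesis using hh1j_CI ij by simp
  next
    case b then show ?thesis using hh_CI_n1 ij by blast
  next
    case c
    obtain k where k: "k \<in> J" "k \<noteq> 1" "k \<noteq> i" using third[of 1 i] idx1 ij by (auto simp: vld_def)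
    have ik: "vld i k" and k1: "vld k 1" and ok: "vld 1 k" using k ij c idx1 by (auto simp: vld_def)
    have "hh i 1 a b \<approx> hh i k a b + hh k 1 1 (b * a)"
      using alpha[OF _ ik k1] ij c by simp
    also have "\<dots> \<approx> hh i k a b + - hh 1 k 1 (b * a)"
      by (rule cg_add[OF cg_refl delta[OF ok]])
    finally have e: "hh i 1 a b \<approx> hh i k a b + - hh 1 k 1 (b * a)" .
    have "hh i k a b \<in> CI" using hh_CI_n1[OF ik c(1) k(2)] .
    moreover have "- hh 1 k 1 (b * a) \<in> CI" using CI_neg[OF D_CI[OF ok]] .
    ultimately have "hh i k a b + - hh 1 k 1 (b * a) \<in> CI" by (rule CI_add)
    then show ?thesis using c(2) CI_cg[OF e] by simp
  qed
qed

lemma h_CI: "vld i j \<Longrightarrow> h i j a b \<in> CI"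
proof -
  assume "vld i j"
  have "h i j a b = smul (dl i) (hh i j a b)" by (simp add: hh_def dl_sq)
  then show ?thesis using CI_smul[OF hh_CI[OF \<open>vld i j\<close>]] by simp
qed

lemma span_CI: "y \<in> SM.span (Vset \<union> Hset) \<Longrightarrow> y \<in> CI"
proof (induct rule: SM.span_induct_alt)
  case base then show ?case by (rule CI_zero)
next
  case (step c g z)
  have "g \<in> CI"
  proof (cases "g \<in> Vset")
    case True then obtain i j a where "g = v i j a" "vld i j" unfolding Vset_def by blast
    then show ?thesis using v_CI by simp
  next
    case False then have "g \<in> Hset" using step(1) by blast
    then obtain i j a b where "g = h i j a b" "vld i j" unfolding Hset_def by blast
    then show ?thesis using h_CI by simp
  qed
  then show ?case using step(2) by (intro CI_add CI_smul)
qed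

lemma FL_CI: "f \<in> FL \<Longrightarrow> f \<in> CI"
proof -
  assume "f \<in> FL"
  then have "f \<in> Sset" by (rule FL_S)
  then obtain y where "y \<in> SM.span (Vset \<union> Hset)" "f \<approx> y" unfolding Sset_def by blast
  then show ?thesis by (intro CI_cg[of f y] span_CI)
qed

lemma ev_VSum: "ev (VSum x) r s = (if (r, s) \<in> OD then x (r, s) else 0)"
proof -
  have "ev (VSum x) r s = (\<Sum>q\<in>OD. if q = (r, s) then x q else 0)"
    unfolding VSum_def ev_sum by (rule sum.cong) (auto simp: Emat_def)
  then show ?thesis by (simp add: sum_if_eq)
qed

lemma ev_DSum_diag: "k0 \<in> KK \<Longrightarrow> ev (DSum y) k0 k0 = - sc (dl 1) (sg (tau m k0 1) (y k0))"
proof -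
  assume k0: "k0 \<in> KK"
  then have "k0 \<noteq> 1" by (simp add: KK_def)
  have "ev (DSum y) k0 k0 = (\<Sum>k\<in>KK. if k = k0 then - sc (dl 1) (sg (tau m k0 1) (y k0)) else 0)"
    unfolding DSum_def ev_sum
    by (rule sum.cong) (use \<open>k0 \<noteq> 1\<close> KK_vld' in \<open>auto simp: ev_hh\<close>)
  then show ?thesis using k0 by (simp add: sum_if_eq)
qed

lemma ev_DSum_11: "ev (DSum y) (Suc 0) (Suc 0) = (\<Sum>k\<in>KK. sc (dl (Suc 0)) (y k))"
  unfolding DSum_def ev_sum
  by (rule sum.cong) (auto simp: ev_hh KK_vld' KK_def)

lemma ev_DSum_off: "r \<noteq> s \<Longrightarrow> ev (DSum y) r s = 0"
  unfolding DSum_def ev_sum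
  by (rule sum.neutral) (auto simp: ev_hh KK_vld')

lemma sc_dl1_inj: "sc (dl 1) z = 0 \<Longrightarrow> z = 0"
proof -
  assume "sc (dl 1) z = 0"
  then have "sc (dl 1) (sc (dl 1) z) = 0" by simp
  then show ?thesis by (simp add: dl_sq)
qed

lemma sc_dl1_inj': "sc (dl (Suc 0)) z = 0 \<Longrightarrow> z = 0"
  using sc_dl1_inj by simp

lemma sg_inj: "sg b z = 0 \<Longrightarrow> (z::'a) = 0"
  by (cases b) auto

lemma canon_ker:
  assumes ev0: "\<And>r s. ev (VSum x + DSum y + Lpp u) r s = 0"
    and Om0: "Om (VSum x + DSum y + Lpp u) \<in> Bd"
  shows "VSum x + DSum y + Lpp u \<in> I"
proof -
  let ?c = "VSum x + DSum y + Lpp u"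
  have x0: "x q = 0" if q: "q \<in> OD" for q
  proof -
    obtain r s where rs: "q = (r, s)" by (cases q)
    with q have "r \<noteq> s" by (simp add: OD_def)
    then have "ev ?c r s = x q" using q rs by (simp add: ev_add ev_VSum ev_DSum_off ev_Lpp)
    with ev0 show ?thesis by simp
  qed
  have y0: "y k = 0" if k: "k \<in> KK" "k \<noteq> 2" for k
  proof -
    have "(k, k) \<notin> OD" by (simp add: OD_def)
    then have "ev ?c k k = - sc (dl 1) (sg (tau m k 1) (y k))"
      using k by (simp add: ev_add ev_VSum ev_DSum_diag ev_Lpp)
    with ev0 have "sc (dl 1) (sg (tau m k 1) (y k)) = 0" by simp
    then show ?thesis by (blast dest: sc_dl1_inj sg_inj)
  qed
  have KK2: "2 \<in> KK" using idx2 by (simp add: KK_def)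
  have y2: "y 2 = 0"
  proof -
    have "(Suc 0, Suc 0) \<notin> OD" by (simp add: OD_def)
    then have "ev ?c (Suc 0) (Suc 0) = (\<Sum>k\<in>KK. sc (dl (Suc 0)) (y k))"
      by (simp add: ev_add ev_VSum ev_DSum_11 ev_Lpp)
    also have "\<dots> = (\<Sum>k\<in>KK. if k = 2 then sc (dl (Suc 0)) (y 2) else 0)"
      by (rule sum.cong) (auto simp: y0)
    also have "\<dots> = sc (dl (Suc 0)) (y 2)" using KK2 by (simp add: sum_if_eq)
    finally have "sc (dl (Suc 0)) (y 2) = 0" using ev0 by simp
    then show ?thesis by (rule sc_dl1_inj')
  qed
  have "VSum x = VSum (\<lambda>q. 0)" unfolding VSum_def by (rule sum.cong) (auto simp: x0)
  moreover have "DSum y = DSum (\<lambda>k. 0)" unfolding DSum_def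
  proof (rule sum.cong)
    fix k assume "k \<in> KK"
    then have "y k = 0" using y0 y2 by (cases "k = 2") auto
    then show "hh 1 k 1 (y k) = hh 1 k 1 0" by simp
  qed simp
  ultimately have cL: "?c \<approx> Lpp u"
    using cg_add[OF cg_add[OF VSum_zero DSum_zero] cg_refl[of "Lpp u"]] by simp
  then have "Om (?c - Lpp u) \<in> Bd" using I_good[of "?c - Lpp u"] by (simp add: cg_def)
  then have "Om ?c - Om (Lpp u) \<in> Bd" by (simp only: Om_diff)
  then have "Om ?c - (Om ?c - Om (Lpp u)) \<in> Bd" by (rule Bd_diff[OF Om0])
  then have "Om (Lpp u) \<in> Bd" by simp
  then have "Om (Lpp u) - (Om (Lpp u) - u) \<in> Bd" by (rule Bd_diff[OF _ Om_Lpp])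
  then have "u \<in> Bd" by simp
  then have "Lpp u \<in> I" by (rule Lpp_Bd)
  then show ?thesis using cL by (simp add: cg_def I_add)
qed

theorem injective: "f \<in> ker_psi sc m n \<Longrightarrow> Om f \<in> Bd \<Longrightarrow> f \<in> I"
proof -
  assume fk: "f \<in> ker_psi sc m n" and fB: "Om f \<in> Bd"
  then have fF: "f \<in> FL" and fe: "\<And>r s. ev f r s = 0" by (auto simp: ker_psi_def fun_eq_iff)
  obtain x y u where fc: "f \<approx> VSum x + DSum y + Lpp u"
    using FL_CI[OF fF] unfolding CI_def Canon_def by blast
  let ?c = "VSum x + DSum y + Lpp u"
  have g: "(\<forall>r s. ev (f - ?c) r s = 0) \<and> Om (f - ?c) \<in> Bd" using I_good fc by (simp add: cg_def)
  have "ev ?c r s = 0" for r s using g fe by (simp add: ev_diff)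
  moreover have "Om ?c \<in> Bd"
  proof -
    have "Om f - Om (f - ?c) \<in> Bd" using g fB by (intro Bd_diff) auto
    then show ?thesis by (simp add: Om_diff)
  qed
  ultimately have "?c \<in> I" by (rule canon_ker)
  have "(f - ?c) + ?c \<in> I" by (rule I_add[OF fc[unfolded cg_def] \<open>?c \<in> I\<close>])
  then show ?thesis by simp
qed

end


lemma coset_eq_iff:
  assumes U: "subsp smul U"
  shows "coset U x = coset U y \<longleftrightarrow> x - y \<in> U"
proof
  assume e: "coset U x = coset U y"
  have "x \<in> coset U x" unfolding coset_def using SM.subsp_zero[OF U] by (metis add.right_neutral imageI)
  then have "x \<in> coset U y" using e by simp
  then obtain w where "w \<in> U" "x = y + w" unfolding coset_def by blast
  then show "x - y \<in> U" by simp
next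
  assume d: "x - y \<in> U"
  show "coset U x = coset U y"
  proof
    show "coset U x \<subseteq> coset U y"
    proof
      fix z assume "z \<in> coset U x"
      then obtain w where w: "w \<in> U" "z = x + w" unfolding coset_def by blast
      then have "(x - y) + w \<in> U" using d SM.subsp_add[OF U] by blast
      moreover have "z = y + ((x - y) + w)" using w by simp
      ultimately show "z \<in> coset U y" unfolding coset_def by blast
    qed
  next
    show "coset U y \<subseteq> coset U x"
    proof
      fix z assume "z \<in> coset U y"
      then obtain w where w: "w \<in> U" "z = y + w" unfolding coset_def by blast
      have "- (x - y) \<in> U" using d SM.subsp_neg[OF U] by blast
      then have "(- (x - y)) + w \<in> U" using w SM.subsp_add[OF U] by blast
      moreover have "z = x + ((- (x - y)) + w)" using w by simp
      ultimately show "z \<in> coset U x" unfolding coset_def by blast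
    qed
  qed
qed

context stlc
begin

abbreviation Ker where "Ker \<equiv> ker_psi sc m n"
abbreviation Cyc where "Cyc \<equiv> HH1_cycles sc"

lemma Ker_add: "f \<in> Ker \<Longrightarrow> g \<in> Ker \<Longrightarrow> f + g \<in> Ker"
  by (auto simp: ker_psi_def FL_add fun_eq_iff ev_add)
lemma Ker_smul: "f \<in> Ker \<Longrightarrow> smul c f \<in> Ker"
  by (auto simp: ker_psi_def FL_smul fun_eq_iff ev_smul)
lemma Ker_diff: "f \<in> Ker \<Longrightarrow> g \<in> Ker \<Longrightarrow> f - g \<in> Ker"
  by (auto simp: ker_psi_def FL_diff fun_eq_iff ev_diff)

lemma cosI: "coset I f = coset I g \<longleftrightarrow> f - g \<in> I"
  by (rule coset_eq_iff[OF subsp_I])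
lemma cosB: "coset Bd x = coset Bd y \<longleftrightarrow> x - y \<in> Bd"
  by (rule coset_eq_iff[OF subsp_Bd])

definition phi where
  "phi X = coset Bd (Om (SOME f. f \<in> Ker \<and> X = coset I f))"

lemma phi_eq: "f \<in> Ker \<Longrightarrow> phi (coset I f) = coset Bd (Om f)"
proof -
  assume f: "f \<in> Ker"
  let ?g = "SOME g. g \<in> Ker \<and> coset I f = coset I g"
  have "\<exists>g. g \<in> Ker \<and> coset I f = coset I g" using f by blast
  then have g0: "?g \<in> Ker \<and> coset I f = coset I ?g" by (rule someI_ex)
  then have g: "?g \<in> Ker" "coset I f = coset I ?g" by blast+
  then have "f - ?g \<in> I" using cosI by blast
  then have "Om (f - ?g) \<in> Bd" using I_good by blast
  then have "Om ?g - Om f \<in> Bd" using Bd_neg by (fastforce simp: Om_diff)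
  then show ?thesis unfolding phi_def using cosB by blast
qed

lemma Lpp_Ker: "u \<in> Cyc \<Longrightarrow> Lpp u \<in> Ker"
  using FL_Lpp ev_Lpp_cycle by (auto simp: ker_psi_def HH1_cycles_def fun_eq_iff)

theorem main: "quot_iso smul Ker I smul Cyc Bd"
  unfolding quot_iso_def
proof (intro exI conjI ballI allI impI)
  show "bij_betw phi (coset I ` Ker) (coset Bd ` Cyc)"
  proof (rule bij_betw_imageI)
    show "inj_on phi (coset I ` Ker)"
    proof (rule inj_onI)
      fix X Y assume "X \<in> coset I ` Ker" "Y \<in> coset I ` Ker" and e: "phi X = phi Y"
      then obtain f g where f: "f \<in> Ker" "X = coset I f" and g: "g \<in> Ker" "Y = coset I g" by blast
      have "Om f - Om g \<in> Bd" using e f g phi_eq cosB by auto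
      then have "Om (f - g) \<in> Bd" by (simp add: Om_diff)
      then have "f - g \<in> I" using injective Ker_diff[OF f(1) g(1)] by blast
      then show "X = Y" using f g cosI by blast
    qed
  next
    show "phi ` coset I ` Ker = coset Bd ` Cyc"
    proof
      show "phi ` coset I ` Ker \<subseteq> coset Bd ` Cyc"
        using phi_eq ker_cycle by auto
    next
      show "coset Bd ` Cyc \<subseteq> phi ` coset I ` Ker"
      proof
        fix Z assume "Z \<in> coset Bd ` Cyc"
        then obtain u where u: "u \<in> Cyc" "Z = coset Bd u" by blast
        have "- (Om (Lpp u) - u) \<in> Bd" by (rule Bd_neg[OF Om_Lpp])
        then have "u - Om (Lpp u) \<in> Bd" by simp
        then have "Z = phi (coset I (Lpp u))" using u phi_eq[OF Lpp_Ker[OF u(1)]] cosB by auto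
        then show "Z \<in> phi ` coset I ` Ker" using Lpp_Ker[OF u(1)] by blast
      qed
    qed
  qed
next
  fix x y x' y'
  assume x: "x \<in> Ker" and y: "y \<in> Ker" and "x' \<in> Cyc" "y' \<in> Cyc"
    and ex: "phi (coset I x) = coset Bd x'" and ey: "phi (coset I y) = coset Bd y'"
  have "Om x - x' \<in> Bd" using ex phi_eq[OF x] cosB by simp
  moreover have "Om y - y' \<in> Bd" using ey phi_eq[OF y] cosB by simp
  ultimately have "(Om x - x') + (Om y - y') \<in> Bd" by (rule Bd_add)
  then have "Om (x + y) - (x' + y') \<in> Bd" by (simp add: Om_add algebra_simps)
  then show "phi (coset I (x + y)) = coset Bd (x' + y')"
    using phi_eq[OF Ker_add[OF x y]] cosB by simp
next
  fix c x x'
  assume x: "x \<in> Ker" and "x' \<in> Cyc" and ex: "phi (coset I x) = coset Bd x'"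
  have "Om x - x' \<in> Bd" using ex phi_eq[OF x] cosB by simp
  then have "smul c (Om x - x') \<in> Bd" by (rule Bd_smul)
  then have "Om (smul c x) - smul c x' \<in> Bd" by (simp add: Om_smul SM.scale_right_diff_distrib)
  then show "phi (coset I (smul c x)) = coset Bd (smul c x')"
    using phi_eq[OF Ker_smul[OF x]] cosB by simp
qed

end

theorem theorem4p2:
  fixes sc :: "'k::field \<Rightarrow> 'a::{ring,monoid_mult} \<Rightarrow> 'a" and m n :: nat
  assumes "K_algebra sc"
    and "m + n \<ge> 3"
    and "m + n = 4 \<Longrightarrow> (2::'k) \<noteq> 0"
    and "m + n = 3 \<Longrightarrow> (3::'k) \<noteq> 0"
  shows "quot_iso smul (ker_psi sc m n) (stl_ideal sc m n)
                  smul (HH1_cycles sc) (HH1_bounds sc)"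
proof -
  interpret stlc sc m n using assms(1,2) by unfold_locales
  show ?thesis by (rule main)
qed


end
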